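(* For every $\mathtt{PDL}$ sequent $\Gamma\Rightarrow\Delta$: if $\Gamma\Rightarrow\Delta$ is valid, then $\Gamma\Rightarrow\Delta$ is cut-free provable in $\mathtt{CGPDL}$ (i.e. it has a $\mathtt{CGPDL}$ proof containing no instance of the Cut rule).
   Context: $\mathtt{PDL}$ formulas/programs over sets $\mathsf{Prop}$, $\mathsf{AtProg}$: $\varphi ::= \bot \mid p \mid (\varphi\to\varphi) \mid [\pi]\varphi$, $\pi ::= \alpha \mid \pi;\pi \mid \pi\cup\pi \mid \pi^{*} \mid \varphi?$. $[\pi]\Gamma=\{[\pi]\varphi:\varphi\in\Gamma\}$. A model $M=(W,(R_\alpha),V)$: $W\neq\emptyset$, $R_\alpha\subseteq W\times W$, $V:W\to\mathcal P(\mathsf{Prop})$; $R_{\pi_0;\pi_1}$ composition, $R_{\pi_0\cup\pi_1}$ union, $R_{\pi^*}$ reflexive–transitive closure of $R_\pi$, $R_{\psi?}=\{(w,w):M,w\models\psi\}$; $\bot$ false, $p$ true at $w$ iff $p\in V(w)$, $\to$ classical, $[\pi]\varphi$ true at $w$ iff $\varphi$ true at all $v$ with $wR_\pi v$. A sequent $\Gamma\Rightarrow\Delta$ is a pair of finite sets of formulas; valid if in every model at every state where all of $\Gamma$ hold some formula of $\Delta$ holds. $\mathtt{CGPDL}$ rules (premises / conclusion): (Ax) / $\Gamma\Rightarrow\Delta$, $\Gamma\cap\Delta\neq\emptyset$; ($\bot$) / $\Gamma,\bot\Rightarrow\Delta$; ($\to$L) $\Gamma\Rightarrow\varphi,\Delta$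 and $\Gamma,\psi\Rightarrow\Delta$ / $\Gamma,\varphi\to\psi\Rightarrow\Delta$; ($\to$R) $\Gamma,\varphi\Rightarrow\psi,\Delta$ / $\Gamma\Rightarrow\varphi\to\psi,\Delta$; (Wk) $\Gamma\Rightarrow\Delta$ / $\Gamma'\Rightarrow\Delta'$, $\Gamma\subseteq\Gamma'$, $\Delta\subseteq\Delta'$; (Cut) $\Gamma\Rightarrow\varphi,\Delta$ and $\Gamma,\varphi\Rightarrow\Delta$ / $\Gamma\Rightarrow\Delta$; (K) $\Gamma\Rightarrow\varphi$ / $\Gamma',[\pi]\Gamma\Rightarrow[\pi]\varphi,\Delta$; ($[;]$L) $\Gamma,[\pi_0][\pi_1]\varphi\Rightarrow\Delta$ / $\Gamma,[\pi_0;\pi_1]\varphi\Rightarrow\Delta$; ($[;]$R) $\Gamma\Rightarrow[\pi_0][\pi_1]\varphi,\Delta$ / $\Gamma\Rightarrow[\pi_0;\pi_1]\varphi,\Delta$; ($[\cup]$L) $\Gamma,[\pi_0]\varphi,[\pi_1]\varphi\Rightarrow\Delta$ / $\Gamma,[\pi_0\cup\pi_1]\varphi\Rightarrow\Delta$; ($[\cup]$R) $\Gamma\Rightarrow\Delta,[\pi_0]\varphi$ and $\Gamma\Rightarrow\Delta,[\pi_1]\varphi$ / $\Gamma\Rightarrow[\pi_0\cup\pi_1]\varphi,\Delta$; ($[*]$L) $\Gamma,\varphi,[\pi][\pi^*]\varphi\Rightarrow\Delta$ / $\Gamma,[\pi^*]\varphi\Rightarrow\Delta$; ($[?]$L) $\Gamma\Rightarrow\varphi,\Delta$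 and $\Gamma,\psi\Rightarrow\Delta$ / $\Gamma,[\varphi?]\psi\Rightarrow\Delta$; ($[?]$R) $\Gamma,\varphi\Rightarrow\psi,\Delta$ / $\Gamma\Rightarrow[\varphi?]\psi,\Delta$; (C-s) $\Gamma\Rightarrow\varphi,\Delta$ and $\Gamma\Rightarrow[\pi][\pi^*]\varphi,\Delta$ / $\Gamma\Rightarrow[\pi^*]\varphi,\Delta$. A pre-proof is a finite tree of sequents built of rule instances whose leaves are Ax/$\bot$ instances or buds, with each bud assigned a companion (an inner node labelled with the same sequent); the derivation graph identifies each bud with its companion; a path is a sequence of nodes each a premise of the previous one's rule instance. A trace along a path $(\Gamma_i\Rightarrow\Delta_i)$ is a sequence $\tau_i\in\Delta_i$ such that: at ($\to$R), ($[;]$R), ($[\cup]$R), ($[?]$R), (C-s), either $\tau_{i+1}=\tau_i$ or $\tau_i$ is the principal formula and $\tau_{i+1}$ is its component in the chosen premise ($\psi$ for $\varphi\to\psi$; $[\pi_0][\pi_1]\varphi$ for $[\pi_0;\pi_1]\varphi$; $[\pi_j]\varphi$ for $[\pi_0\cup\pi_1]\varphi$ in the premise containing $[\pi_j]\varphi$; $\psi$ for $[\varphi?]\psi$; $\varphi$ or $[\pi][\pi^*]\varphi$ for $[\pi^*]\varphi$, the latter being a progress point); at (K), $\tau_i$ is the principal formula $[\pi]\varphi$ and $\tau_{i+1}=\varphi$; at all other rules, $\tau_{i+1}=\tau_i$. A $\mathtt{CGPDL}$ proof is a pre-proof in which every infinite path of the derivation graph has a tail followed by a trace with infinitely many progress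 points. *)

theory Defs
  imports Main
begin

datatype ('p, 'a) fm =
    Bot
  | Atom 'p
  | Imp "('p, 'a) fm" "('p, 'a) fm"
  | Box "('p, 'a) prog" "('p, 'a) fm"
and ('p, 'a) prog =
    At 'a
  | Seq "('p, 'a) prog" "('p, 'a) prog"
  | Choice "('p, 'a) prog" "('p, 'a) prog"
  | Star "('p, 'a) prog"
  | Test "('p, 'a) fm"

primrec sat :: "'w set \<Rightarrow> ('a \<Rightarrow> ('w \<times> 'w) set) \<Rightarrow> ('w \<Rightarrow> 'p set) \<Rightarrow> 'w \<Rightarrow> ('p, 'a) fm \<Rightarrow> bool"
  and rel :: "'w set \<Rightarrow> ('a \<Rightarrow> ('w \<times> 'w) set) \<Rightarrow> ('w \<Rightarrow> 'p set) \<Rightarrow> ('p, 'a) prog \<Rightarrow> ('w \<times> 'w) set"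
where
  "sat W R V w Bot = False"
| "sat W R V w (Atom p) = (p \<in> V w)"
| "sat W R V w (Imp f g) = (sat W R V w f \<longrightarrow> sat W R V w g)"
| "sat W R V w (Box pr f) = (\<forall>v. (w, v) \<in> rel W R V pr \<longrightarrow> sat W R V v f)"
| "rel W R V (At a) = R a"
| "rel W R V (Seq p q) = rel W R V p O rel W R V q"
| "rel W R V (Choice p q) = rel W R V p \<union> rel W R V q"
| "rel W R V (Star p) = Id_on W \<union> (rel W R V p)\<^sup>+"
| "rel W R V (Test f) = {(w, w) | w. w \<in> W \<and> sat W R V w f}"

definition is_model :: "'w set \<Rightarrow> ('a \<Rightarrow> ('w \<times> 'w) set) \<Rightarrow> ('w \<Rightarrow> 'p set) \<Rightarrow> bool" where
  "is_model W R V \<longleftrightarrow> W \<noteq> {} \<and> (\<forall>a. R a \<subseteq> W \<times> W)"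

definition valid_in :: "'w itself \<Rightarrow> ('p, 'a) fm set \<Rightarrow> ('p, 'a) fm set \<Rightarrow> bool" where
  "valid_in _ G D \<longleftrightarrow>
     (\<forall>(W :: 'w set) R V. is_model W R V \<longrightarrow>
        (\<forall>w\<in>W. (\<forall>f\<in>G. sat W R V w f) \<longrightarrow> (\<exists>g\<in>D. sat W R V w g)))"

text \<open>Validity: states taken from nat (PDL has the finite model property, so this is validity in all models).\<close>
definition valid :: "('p, 'a) fm set \<Rightarrow> ('p, 'a) fm set \<Rightarrow> bool" where
  "valid G D \<longleftrightarrow> valid_in TYPE(nat) G D"

type_synonym ('p, 'a) sequent = "('p, 'a) fm set \<times> ('p, 'a) fm set"

text \<open>Rule names, carrying the data determining the principal formula.\<close>
datatype ('p, 'a) rule =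
    RAx
  | RBot
  | RImpL "('p, 'a) fm" "('p, 'a) fm"
  | RImpR "('p, 'a) fm" "('p, 'a) fm"
  | RWk
  | RCut "('p, 'a) fm"
  | RK "('p, 'a) prog" "('p, 'a) fm"
  | RSeqL "('p, 'a) prog" "('p, 'a) prog" "('p, 'a) fm"
  | RSeqR "('p, 'a) prog" "('p, 'a) prog" "('p, 'a) fm"
  | RChoiceL "('p, 'a) prog" "('p, 'a) prog" "('p, 'a) fm"
  | RChoiceR "('p, 'a) prog" "('p, 'a) prog" "('p, 'a) fm"
  | RStarL "('p, 'a) prog" "('p, 'a) fm"
  | RTestL "('p, 'a) fm" "('p, 'a) fm"
  | RTestR "('p, 'a) fm" "('p, 'a) fm"
  | RCS "('p, 'a) prog" "('p, 'a) fm"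

inductive rinst :: "('p, 'a) rule \<Rightarrow> ('p, 'a) sequent list \<Rightarrow> ('p, 'a) sequent \<Rightarrow> bool" where
  ax: "G \<inter> D \<noteq> {} \<Longrightarrow> rinst RAx [] (G, D)"
| bot: "rinst RBot [] (insert Bot G, D)"
| impL: "rinst (RImpL f g) [(G, insert f D), (insert g G, D)] (insert (Imp f g) G, D)"
| impR: "rinst (RImpR f g) [(insert f G, insert g D)] (G, insert (Imp f g) D)"
| wk: "G \<subseteq> G' \<Longrightarrow> D \<subseteq> D' \<Longrightarrow> rinst RWk [(G, D)] (G', D')"
| cut: "rinst (RCut f) [(G, insert f D), (insert f G, D)] (G, D)"
| k: "rinst (RK p f) [(G, {f})] (G' \<union> Box p ` G, insert (Box p f) D)"
| seqL: "rinst (RSeqL p q f) [(insert (Box p (Box q f)) G, D)] (insert (Box (Seq p q) f) G, D)"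
| seqR: "rinst (RSeqR p q f) [(G, insert (Box p (Box q f)) D)] (G, insert (Box (Seq p q) f) D)"
| choiceL: "rinst (RChoiceL p q f) [(insert (Box p f) (insert (Box q f) G), D)]
                                   (insert (Box (Choice p q) f) G, D)"
| choiceR: "rinst (RChoiceR p q f) [(G, insert (Box p f) D), (G, insert (Box q f) D)]
                                   (G, insert (Box (Choice p q) f) D)"
| starL: "rinst (RStarL p f) [(insert f (insert (Box p (Box (Star p) f)) G), D)]
                            (insert (Box (Star p) f) G, D)"
| testL: "rinst (RTestL f g) [(G, insert f D), (insert g G, D)] (insert (Box (Test f) g) G, D)"
| testR: "rinst (RTestR f g) [(insert f G, insert g D)] (G, insert (Box (Test f) g) D)"
| cs: "rinst (RCS p f) [(G, insert f D), (G, insert (Box p (Box (Star p) f)) D)]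
                      (G, insert (Box (Star p) f) D)"

text \<open>Trace step: tstep r i t t' -- the trace moves from t (in the conclusion of an instance
  of r) to t' (in its i-th premise, counting from 0).\<close>
fun tstep :: "('p, 'a) rule \<Rightarrow> nat \<Rightarrow> ('p, 'a) fm \<Rightarrow> ('p, 'a) fm \<Rightarrow> bool" where
  "tstep (RImpR f g) i t t' = (t' = t \<or> (t = Imp f g \<and> t' = g))"
| "tstep (RSeqR p q f) i t t' = (t' = t \<or> (t = Box (Seq p q) f \<and> t' = Box p (Box q f)))"
| "tstep (RChoiceR p q f) i t t' =
     (t' = t \<or> (t = Box (Choice p q) f \<and> t' = Box (if i = 0 then p else q) f))"
| "tstep (RTestR f g) i t t' = (t' = t \<or> (t = Box (Test f) g \<and> t' = g))"
| "tstep (RCS p f) i t t' =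
     (t' = t \<or> (t = Box (Star p) f \<and> t' = (if i = 0 then f else Box p (Box (Star p) f))))"
| "tstep (RK p f) i t t' = (t = Box p f \<and> t' = f)"
| "tstep RAx i t t' = (t' = t)"
| "tstep RBot i t t' = (t' = t)"
| "tstep (RImpL f g) i t t' = (t' = t)"
| "tstep RWk i t t' = (t' = t)"
| "tstep (RCut f) i t t' = (t' = t)"
| "tstep (RSeqL p q f) i t t' = (t' = t)"
| "tstep (RChoiceL p q f) i t t' = (t' = t)"
| "tstep (RStarL p f) i t t' = (t' = t)"
| "tstep (RTestL f g) i t t' = (t' = t)"

definition progress :: "('p, 'a) rule \<Rightarrow> nat \<Rightarrow> ('p, 'a) fm \<Rightarrow> ('p, 'a) fm \<Rightarrow> bool" where
  "progress r i t t' \<longleftrightarrow>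
     (\<exists>p f. r = RCS p f \<and> i = 1 \<and> t = Box (Star p) f \<and> t' = Box p (Box (Star p) f))"

text \<open>A node is either an inner node / axiom leaf carrying a rule instance and its list of
  children (premises), or a bud pointing to its companion.\<close>
datatype ('p, 'a) node_kind = Inner "('p, 'a) rule" "nat list" | Bud nat

record ('p, 'a) preproof =
  nodes :: "nat set"
  root :: nat
  lab :: "nat \<Rightarrow> ('p, 'a) sequent"
  kind :: "nat \<Rightarrow> ('p, 'a) node_kind"

definition child_edges :: "('p, 'a) preproof \<Rightarrow> (nat \<times> nat) set" where
  "child_edges P = {(n, c). n \<in> nodes P \<and> (\<exists>r cs. kind P n = Inner r cs \<and> c \<in> set cs)}"

definition is_preproof :: "('p, 'a) preproof \<Rightarrow> bool" where
  "is_preproof P \<longleftrightarrow>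
     finite (nodes P) \<and> root P \<in> nodes P
   \<comment> \<open>sequents are pairs of finite sets\<close>
   \<and> (\<forall>n\<in>nodes P. finite (fst (lab P n)) \<and> finite (snd (lab P n)))
   \<comment> \<open>tree structure\<close>
   \<and> (\<forall>n\<in>nodes P. \<forall>r cs. kind P n = Inner r cs \<longrightarrow> set cs \<subseteq> nodes P)
   \<and> (\<forall>n\<in>nodes P. (root P, n) \<in> (child_edges P)\<^sup>*)
   \<and> (\<forall>n\<in>nodes P. \<forall>r cs i. kind P n = Inner r cs \<longrightarrow> i < length cs \<longrightarrow> cs ! i \<noteq> root P)
   \<and> (\<forall>n\<in>nodes P. \<forall>m\<in>nodes P. \<forall>r cs r' cs' i j.
        kind P n = Inner r cs \<longrightarrow> kind P m = Inner r' cs' \<longrightarrow> i < length cs \<longrightarrow> j < length cs'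
        \<longrightarrow> cs ! i = cs' ! j \<longrightarrow> n = m \<and> i = j)
   \<comment> \<open>rule instances (leaves with a rule are exactly Ax / Bot instances)\<close>
   \<and> (\<forall>n\<in>nodes P. \<forall>r cs. kind P n = Inner r cs \<longrightarrow> rinst r (map (lab P) cs) (lab P n))
   \<comment> \<open>buds: companion is an inner node with the same sequent\<close>
   \<and> (\<forall>n\<in>nodes P. \<forall>c. kind P n = Bud c \<longrightarrow>
        c \<in> nodes P \<and> lab P c = lab P n \<and> (\<exists>r cs. kind P c = Inner r cs \<and> cs \<noteq> []))"

text \<open>In the derivation graph a bud is identified with its companion.\<close>
definition resolve :: "('p, 'a) preproof \<Rightarrow> nat \<Rightarrow> nat" where
  "resolve P c = (case kind P c of Bud d \<Rightarrow> d | Inner _ _ \<Rightarrow> c)"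

definition rule_of :: "('p, 'a) preproof \<Rightarrow> nat \<Rightarrow> ('p, 'a) rule" where
  "rule_of P n = (case kind P n of Inner r _ \<Rightarrow> r | Bud _ \<Rightarrow> RAx)"

definition inf_path :: "('p, 'a) preproof \<Rightarrow> (nat \<Rightarrow> nat) \<Rightarrow> (nat \<Rightarrow> nat) \<Rightarrow> bool" where
  "inf_path P f g \<longleftrightarrow>
     (\<forall>j. f j \<in> nodes P \<and>
          (\<exists>r cs. kind P (f j) = Inner r cs \<and> g j < length cs \<and> f (Suc j) = resolve P (cs ! g j)))"

definition good_trace :: "('p, 'a) preproof \<Rightarrow> (nat \<Rightarrow> nat) \<Rightarrow> (nat \<Rightarrow> nat) \<Rightarrow> nat \<Rightarrow> (nat \<Rightarrow> ('p, 'a) fm) \<Rightarrow> bool" where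
  "good_trace P f g k t \<longleftrightarrow>
     (\<forall>j\<ge>k. t j \<in> snd (lab P (f j)) \<and> tstep (rule_of P (f j)) (g j) (t j) (t (Suc j)))
   \<and> (\<forall>m. \<exists>j\<ge>max k m. progress (rule_of P (f j)) (g j) (t j) (t (Suc j)))"

definition is_proof :: "('p, 'a) preproof \<Rightarrow> bool" where
  "is_proof P \<longleftrightarrow> is_preproof P \<and>
     (\<forall>f g. inf_path P f g \<longrightarrow> (\<exists>k t. good_trace P f g k t))"

definition cut_free :: "('p, 'a) preproof \<Rightarrow> bool" where
  "cut_free P \<longleftrightarrow> (\<forall>n\<in>nodes P. \<forall>f cs. kind P n \<noteq> Inner (RCut f) cs)"

definition cutfree_provable :: "('p, 'a) fm set \<Rightarrow> ('p, 'a) fm set \<Rightarrow> bool" where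
  "cutfree_provable G D \<longleftrightarrow>
     (\<exists>P :: ('p, 'a) preproof. is_proof P \<and> cut_free P \<and> lab P (root P) = (G, D))"

end

theory Submission
  imports Defs "HOL-Library.Countable"
begin

primrec msz :: "('p,'a) fm \<Rightarrow> nat" and pw :: "('p,'a) prog \<Rightarrow> nat" where
  "msz Bot = 1" | "msz (Atom p) = 1" | "msz (Imp f g) = msz f + msz g + 1"
| "msz (Box p f) = pw p + msz f"
| "pw (At a) = 1" | "pw (Seq p q) = pw p + pw q + 1" | "pw (Choice p q) = pw p + pw q + 1"
| "pw (Star p) = pw p + 1" | "pw (Test f) = 1"

lemma pw_pos[simp]: "0 < pw p"
  by (cases p) auto

lemma tstep_dec:
  assumes "tstep r i t t'" "t' \<noteq> t" "\<not> progress r i t t'" "i < 2"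
  shows "msz t' < msz t"
  using assms
  by (cases r) (auto simp: progress_def split: if_splits)


primrec fsz :: "('p,'a) fm \<Rightarrow> nat" and psz :: "('p,'a) prog \<Rightarrow> nat" where
  "fsz Bot = 1" | "fsz (Atom p) = 1" | "fsz (Imp f g) = fsz f + fsz g + 1"
| "fsz (Box p f) = psz p + fsz f + 1"
| "psz (At a) = 1" | "psz (Seq p q) = psz p + psz q + 1" | "psz (Choice p q) = psz p + psz q + 1"
| "psz (Star p) = psz p + 1" | "psz (Test f) = fsz f + 1"

fun comps :: "('p,'a) fm \<Rightarrow> ('p,'a) fm set" where
  "comps (Imp f g) = {f, g}"
| "comps (Box (At a) f) = {f}"
| "comps (Box (Seq p q) f) = {Box p (Box q f)}"
| "comps (Box (Choice p q) f) = {Box p f, Box q f}"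
| "comps (Box (Star p) f) = {f, Box p (Box (Star p) f)}"
| "comps (Box (Test g) f) = {g, f}"
| "comps _ = {}"

fun sides :: "('p,'a) fm \<Rightarrow> ('p,'a) fm set" where
  "sides (Imp f g) = {f}"
| "sides (Box (Test g) f) = {g}"
| "sides _ = {}"

fun fl :: "('p,'a) fm \<Rightarrow> ('p,'a) fm set" and flp :: "('p,'a) prog \<Rightarrow> ('p,'a) fm \<Rightarrow> ('p,'a) fm set" where
  "fl Bot = {Bot}" | "fl (Atom p) = {Atom p}" | "fl (Imp f g) = insert (Imp f g) (fl f \<union> fl g)"
| "fl (Box p f) = flp p f \<union> fl f"
| "flp (At a) f = {Box (At a) f}"
| "flp (Seq p q) f = insert (Box (Seq p q) f) (flp p (Box q f) \<union> flp q f)"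
| "flp (Choice p q) f = insert (Box (Choice p q) f) (flp p f \<union> flp q f)"
| "flp (Star p) f = insert (Box (Star p) f) (flp p (Box (Star p) f))"
| "flp (Test g) f = insert (Box (Test g) f) (fl g)"

lemma fixes \<phi> :: "('p,'a) fm" and \<pi> :: "('p,'a) prog"
  shows fl_finite: "finite (fl \<phi>)" and flp_finite: "\<forall>f. finite (flp \<pi> f)"
  by (induct \<phi> and \<pi> rule: fm.induct prog.induct) auto

lemma flp_self: "Box \<pi> f \<in> flp \<pi> f"
  by (cases \<pi>) auto

lemma fl_self: "\<phi> \<in> fl \<phi>"
  by (cases \<phi>) (auto simp: flp_self)

lemma fixes \<phi> :: "('p,'a) fm" and \<pi> :: "('p,'a) prog"
  shows fl_closed_aux: "\<forall>\<psi>\<in>fl \<phi>. comps \<psi> \<subseteq> fl \<phi>"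
  and flp_closed_aux: "\<forall>f. \<forall>\<psi>\<in>flp \<pi> f. comps \<psi> \<subseteq> flp \<pi> f \<union> fl f"
proof (induct \<phi> and \<pi> rule: fm.induct prog.induct)
  case (Box p f) then show ?case by auto
next
  case (Seq p q) then show ?case using flp_self fl_self by fastforce
next
  case (Choice p q) then show ?case using flp_self fl_self by fastforce
next
  case (Star p) then show ?case using flp_self fl_self by fastforce
next
  case (Test g) then show ?case using flp_self fl_self by fastforce
qed (auto simp: fl_self)

lemma fl_closed: "\<psi> \<in> fl \<phi> \<Longrightarrow> x \<in> comps \<psi> \<Longrightarrow> x \<in> fl \<phi>"
  using fl_closed_aux by blast

lemma fixes \<phi> :: "('p,'a) fm" and \<pi> :: "('p,'a) prog"
  shows fl_sides_aux: "\<forall>\<psi>\<in>fl \<phi>. \<forall>s\<in>sides \<psi>. fsz s < fsz \<phi>"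
  and flp_sides_aux: "\<forall>f. \<forall>\<psi>\<in>flp \<pi> f. \<forall>s\<in>sides \<psi>. fsz s < psz \<pi>"
proof (induct \<phi> and \<pi> rule: fm.induct prog.induct)
  case (Box p f) then show ?case by fastforce
next
  case (Seq p q) then show ?case by fastforce
next
  case (Choice p q) then show ?case by fastforce
next
  case (Star p) then show ?case by fastforce
next
  case (Test g) then show ?case by fastforce
qed (auto, fastforce+)

lemma fl_sides: "\<psi> \<in> fl \<phi> \<Longrightarrow> s \<in> sides \<psi> \<Longrightarrow> fsz s < fsz \<phi>"
  using fl_sides_aux by blast


fun dec :: "('p,'a) fm \<Rightarrow> bool" where
  "dec (Imp f g) = True"
| "dec (Box (At a) f) = False"
| "dec (Box p f) = True"
| "dec _ = False"

fun premsL :: "('p,'a) fm \<Rightarrow> ('p,'a) sequent \<Rightarrow> ('p,'a) sequent list" where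
  "premsL (Imp f g) (G,D) = [(G, insert f D), (insert g G, D)]"
| "premsL (Box (Seq p q) f) (G,D) = [(insert (Box p (Box q f)) G, D)]"
| "premsL (Box (Choice p q) f) (G,D) = [(insert (Box p f) (insert (Box q f) G), D)]"
| "premsL (Box (Star p) f) (G,D) = [(insert f (insert (Box p (Box (Star p) f)) G), D)]"
| "premsL (Box (Test g) f) (G,D) = [(G, insert g D), (insert f G, D)]"
| "premsL _ s = []"

fun ruleL :: "('p,'a) fm \<Rightarrow> ('p,'a) rule" where
  "ruleL (Imp f g) = RImpL f g"
| "ruleL (Box (Seq p q) f) = RSeqL p q f"
| "ruleL (Box (Choice p q) f) = RChoiceL p q f"
| "ruleL (Box (Star p) f) = RStarL p f"
| "ruleL (Box (Test g) f) = RTestL g f"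
| "ruleL _ = RAx"

fun premsR :: "('p,'a) fm \<Rightarrow> ('p,'a) sequent \<Rightarrow> ('p,'a) sequent list" where
  "premsR (Imp f g) (G,D) = [(insert f G, insert g D)]"
| "premsR (Box (Seq p q) f) (G,D) = [(G, insert (Box p (Box q f)) D)]"
| "premsR (Box (Choice p q) f) (G,D) = [(G, insert (Box p f) D), (G, insert (Box q f) D)]"
| "premsR (Box (Star p) f) (G,D) = [(G, insert f D), (G, insert (Box p (Box (Star p) f)) D)]"
| "premsR (Box (Test g) f) (G,D) = [(insert g G, insert f D)]"
| "premsR _ s = []"

fun ruleR :: "('p,'a) fm \<Rightarrow> ('p,'a) rule" where
  "ruleR (Imp f g) = RImpR f g"
| "ruleR (Box (Seq p q) f) = RSeqR p q f"
| "ruleR (Box (Choice p q) f) = RChoiceR p q f"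
| "ruleR (Box (Star p) f) = RCS p f"
| "ruleR (Box (Test g) f) = RTestR g f"
| "ruleR _ = RAx"

fun compR :: "('p,'a) fm \<Rightarrow> nat \<Rightarrow> ('p,'a) fm" where
  "compR (Imp f g) i = g"
| "compR (Box (Seq p q) f) i = Box p (Box q f)"
| "compR (Box (Choice p q) f) i = (if i = 0 then Box p f else Box q f)"
| "compR (Box (Star p) f) i = (if i = 0 then f else Box p (Box (Star p) f))"
| "compR (Box (Test g) f) i = f"
| "compR f i = f"

definition sle :: "('p,'a) sequent \<Rightarrow> ('p,'a) sequent \<Rightarrow> bool" where
  "sle s t \<longleftrightarrow> fst s \<subseteq> fst t \<and> snd s \<subseteq> snd t"

lemma sle_refl[simp]: "sle s s" by (simp add: sle_def)
lemma sle_trans: "sle s t \<Longrightarrow> sle t u \<Longrightarrow> sle s u" by (auto simp: sle_def)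

lemma rinstL: "\<phi> \<in> fst s \<Longrightarrow> dec \<phi> \<Longrightarrow> rinst (ruleL \<phi>) (premsL \<phi> s) s"
proof -
  assume a: "\<phi> \<in> fst s" "dec \<phi>"
  obtain G D where s: "s = (G, D)" by (cases s)
  have G: "insert \<phi> G = G" using a s by auto
  show ?thesis using a(2) G unfolding s
    by (cases \<phi> rule: dec.cases) (simp_all, (metis rinst.impL rinst.seqL rinst.choiceL rinst.starL rinst.testL)+)
qed

lemma rinstR: "\<phi> \<in> snd s \<Longrightarrow> dec \<phi> \<Longrightarrow> rinst (ruleR \<phi>) (premsR \<phi> s) s"
proof -
  assume a: "\<phi> \<in> snd s" "dec \<phi>"
  obtain G D where s: "s = (G, D)" by (cases s)
  have D: "insert \<phi> D = D" using a s by auto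
  show ?thesis using a(2) D unfolding s
    by (cases \<phi> rule: dec.cases) (simp_all, (metis rinst.impR rinst.seqR rinst.choiceR rinst.cs rinst.testR)+)
qed

lemma premsR_len: "dec \<phi> \<Longrightarrow> 0 < length (premsR \<phi> s) \<and> length (premsR \<phi> s) \<le> 2"
  by (cases s; cases \<phi> rule: dec.cases) auto

lemma premsR_len_indep: "length (premsR \<phi> s) = length (premsR \<phi> t)"
  by (cases s; cases t; cases \<phi> rule: dec.cases) auto

lemma premsL_len_indep: "length (premsL \<phi> s) = length (premsL \<phi> t)"
  by (cases s; cases t; cases \<phi> rule: dec.cases) auto

lemma premsL_ne: "dec \<phi> \<Longrightarrow> premsL \<phi> s \<noteq> []"
  by (cases s; cases \<phi> rule: dec.cases) auto

lemma ruleR_notK: "dec \<phi> \<Longrightarrow> ruleR \<phi> \<noteq> RK p f"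
  by (cases \<phi> rule: dec.cases) auto

lemma ruleL_notK: "dec \<phi> \<Longrightarrow> ruleL \<phi> \<noteq> RK p f"
  by (cases \<phi> rule: dec.cases) auto

lemma tstep_id: "(\<And>p f. r \<noteq> RK p f) \<Longrightarrow> tstep r i t t"
  by (cases r) auto

lemma tstepR: "dec \<phi> \<Longrightarrow> i < length (premsR \<phi> s) \<Longrightarrow> tstep (ruleR \<phi>) i \<phi> (compR \<phi> i)"
  by (cases s; cases \<phi> rule: dec.cases) (auto simp: less_Suc_eq)

lemma compR_in: "i < length (premsR \<phi> s) \<Longrightarrow> compR \<phi> i \<in> snd (premsR \<phi> s ! i)"
  by (cases s; cases \<phi> rule: dec.cases) (auto simp: less_Suc_eq nth_Cons')

lemma compR_comps: "dec \<phi> \<Longrightarrow> i < length (premsR \<phi> s) \<Longrightarrow> compR \<phi> i \<in> comps \<phi>"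
  by (cases s; cases \<phi> rule: dec.cases) auto

lemma comps_neq: "x \<in> comps \<phi> \<Longrightarrow> x \<noteq> \<phi>"
  by (cases \<phi> rule: dec.cases) (auto dest: arg_cong[of _ _ psz] arg_cong[of _ _ fsz])

lemma premsR_sle: "p \<in> set (premsR \<phi> s) \<Longrightarrow> sle s p"
  by (cases s; cases \<phi> rule: dec.cases) (auto simp: sle_def)

lemma premsL_sle: "p \<in> set (premsL \<phi> s) \<Longrightarrow> sle s p"
  by (cases s; cases \<phi> rule: dec.cases) (auto simp: sle_def)

lemma premsR_C: "p \<in> set (premsR \<phi> s) \<Longrightarrow> fst s \<subseteq> C \<Longrightarrow> snd s \<subseteq> C \<Longrightarrow> comps \<phi> \<subseteq> C
   \<Longrightarrow> fst p \<subseteq> C \<and> snd p \<subseteq> C"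
  by (cases s; cases \<phi> rule: dec.cases) auto

lemma premsL_C: "p \<in> set (premsL \<phi> s) \<Longrightarrow> fst s \<subseteq> C \<Longrightarrow> snd s \<subseteq> C \<Longrightarrow> comps \<phi> \<subseteq> C
   \<Longrightarrow> fst p \<subseteq> C \<and> snd p \<subseteq> C"
  by (cases s; cases \<phi> rule: dec.cases) auto

lemma premsR_mono: "i < length (premsR \<phi> n) \<Longrightarrow> sle n m \<Longrightarrow> sle (premsR \<phi> n ! i) m
   \<Longrightarrow> premsR \<phi> m ! i = m"
  by (cases n; cases m; cases \<phi> rule: dec.cases) (auto simp: sle_def less_Suc_eq nth_Cons')

lemma premsL_mono: "i < length (premsL \<phi> n) \<Longrightarrow> sle n m \<Longrightarrow> sle (premsL \<phi> n ! i) m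
   \<Longrightarrow> premsL \<phi> m ! i = m"
  by (cases n; cases m; cases \<phi> rule: dec.cases) (auto simp: sle_def less_Suc_eq nth_Cons')


type_synonym ('p,'a) cfg = "('p,'a) sequent \<times> ('p,'a) fm option \<times> ('p,'a) fm option"

abbreviation nd :: "('p,'a) cfg \<Rightarrow> ('p,'a) sequent" where "nd c \<equiv> fst c"
abbreviation cf1 :: "('p,'a) cfg \<Rightarrow> ('p,'a) fm option" where "cf1 c \<equiv> fst (snd c)"
abbreviation cf2 :: "('p,'a) cfg \<Rightarrow> ('p,'a) fm option" where "cf2 c \<equiv> snd (snd c)"

definition axiom :: "('p,'a) sequent \<Rightarrow> bool" where
  "axiom n \<longleftrightarrow> Bot \<in> fst n \<or> fst n \<inter> snd n \<noteq> {}"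

definition unsatL :: "('p,'a) sequent \<Rightarrow> ('p,'a) fm \<Rightarrow> bool" where
  "unsatL n \<phi> \<longleftrightarrow> \<phi> \<in> fst n \<and> dec \<phi> \<and> (\<forall>p\<in>set (premsL \<phi> n). p \<noteq> n)"
definition unsatR :: "('p,'a) sequent \<Rightarrow> ('p,'a) fm \<Rightarrow> bool" where
  "unsatR n \<phi> \<longleftrightarrow> \<phi> \<in> snd n \<and> dec \<phi> \<and> (\<forall>p\<in>set (premsR \<phi> n). p \<noteq> n)"
definition closed :: "('p,'a) sequent \<Rightarrow> bool" where
  "closed n \<longleftrightarrow> \<not> (\<exists>\<phi>. unsatL n \<phi>) \<and> \<not> (\<exists>\<phi>. unsatR n \<phi>)"

definition pstep :: "('p,'a) sequent \<Rightarrow> ('p,'a) fm \<Rightarrow> ('p,'a) fm \<Rightarrow> bool" where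
  "pstep n \<sigma> \<sigma>' \<longleftrightarrow> \<sigma> \<in> snd n \<and> dec \<sigma> \<and>
     (\<exists>i<length (premsR \<sigma> n). premsR \<sigma> n ! i = n \<and> \<sigma>' = compR \<sigma> i)"
definition good :: "('p,'a) sequent \<Rightarrow> ('p,'a) fm \<Rightarrow> bool" where
  "good n \<sigma> \<longleftrightarrow> (\<exists>\<sigma>'. (pstep n)\<^sup>*\<^sup>* \<sigma> \<sigma>' \<and> \<not> dec \<sigma>')"
definition bad :: "('p,'a) sequent \<Rightarrow> ('p,'a) fm \<Rightarrow> bool" where
  "bad n \<sigma> \<longleftrightarrow> \<sigma> \<in> snd n \<and> \<not> good n \<sigma>"

definition phase :: "('p,'a) cfg \<Rightarrow> nat" where
  "phase c = (if axiom (nd c) then 0 else if \<not> closed (nd c) then 1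
     else if (\<exists>\<tau>. cf1 c = Some \<tau> \<and> dec \<tau>) then 2
     else if (\<exists>\<sigma>. bad (nd c) \<sigma>) then 3 else 4)"

datatype ('p,'a) mv = MAx "('p,'a) rule" | MStep "('p,'a) rule" "('p,'a) cfg list" | MWorld

definition chooseL :: "('p,'a) sequent \<Rightarrow> ('p,'a) fm" where
  "chooseL n = (SOME \<phi>. unsatL n \<phi>)"
definition chooseR :: "('p,'a) sequent \<Rightarrow> ('p,'a) fm" where
  "chooseR n = (SOME \<phi>. unsatR n \<phi>)"
definition chooseB :: "('p,'a) cfg \<Rightarrow> ('p,'a) fm" where
  "chooseB c = (if (\<exists>\<sigma>0. cf2 c = Some \<sigma>0 \<and> bad (nd c) \<sigma>0) then the (cf2 c) else SOME \<sigma>. bad (nd c) \<sigma>)"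

definition move :: "('p,'a) cfg \<Rightarrow> ('p,'a) mv" where
  "move c = (let n = nd c in
     if axiom n then MAx (if Bot \<in> fst n then RBot else RAx)
     else if \<not> closed n then
       (if (\<exists>\<phi>. unsatL n \<phi>) then
          MStep (ruleL (chooseL n)) (map (\<lambda>p. (p, cf1 c, None)) (premsL (chooseL n) n))
        else MStep (ruleR (chooseR n))
           (map (\<lambda>i. (premsR (chooseR n) n ! i,
                      if cf1 c = Some (chooseR n) then Some (compR (chooseR n) i) else cf1 c, None))
              [0..<length (premsR (chooseR n) n)]))
     else if (\<exists>\<tau>. cf1 c = Some \<tau> \<and> dec \<tau>) then
       MStep (ruleR (the (cf1 c)))
         (map (\<lambda>i. (premsR (the (cf1 c)) n ! i, Some (compR (the (cf1 c)) i), None))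
            [0..<length (premsR (the (cf1 c)) n)])
     else if (\<exists>\<sigma>. bad n \<sigma>) then
       MStep (ruleR (chooseB c))
         (map (\<lambda>i. (premsR (chooseB c) n ! i, cf1 c,
                    if premsR (chooseB c) n ! i = n then Some (compR (chooseB c) i) else None))
            [0..<length (premsR (chooseB c) n)])
     else MWorld)"

definition kchild :: "('p,'a) cfg \<Rightarrow> 'a \<Rightarrow> ('p,'a) fm \<Rightarrow> ('p,'a) cfg" where
  "kchild c a Y = (({\<phi>. Box (At a) \<phi> \<in> fst (nd c)}, {Y}), Some Y, None)"

definition ok1 :: "('p,'a) cfg \<Rightarrow> ('p,'a) rule \<Rightarrow> nat \<Rightarrow> ('p,'a) cfg \<Rightarrow> bool" where
  "ok1 c r i c' \<longleftrightarrow> (cf1 c = None \<and> cf1 c' = None) \<or>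
     (\<exists>\<tau> \<tau>'. cf1 c = Some \<tau> \<and> cf1 c' = Some \<tau>' \<and> tstep r i \<tau> \<tau>')"
definition ok2 :: "('p,'a) cfg \<Rightarrow> ('p,'a) rule \<Rightarrow> nat \<Rightarrow> ('p,'a) cfg \<Rightarrow> bool" where
  "ok2 c r i c' \<longleftrightarrow> (cf2 c = None \<and> cf2 c' = None) \<or>
     (\<exists>\<tau> \<tau>'. cf2 c = Some \<tau> \<and> cf2 c' = Some \<tau>' \<and> tstep r i \<tau> \<tau>')"

definition rec1 :: "('p,'a) cfg \<Rightarrow> bool" where "rec1 c \<longleftrightarrow> phase c = 2 \<or> phase c = 4"
definition goodf2 :: "('p,'a) cfg \<Rightarrow> bool" where
  "goodf2 c \<longleftrightarrow> (\<exists>\<sigma>0. cf2 c = Some \<sigma>0 \<and> bad (nd c) \<sigma>0)"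
definition rec2 :: "('p,'a) cfg \<Rightarrow> bool" where "rec2 c \<longleftrightarrow> phase c = 3 \<and> goodf2 c"

definition u1 :: "('p,'a) cfg \<Rightarrow> ('p,'a) rule \<Rightarrow> nat \<Rightarrow> ('p,'a) cfg \<Rightarrow> ('p,'a) cfg list \<Rightarrow> ('p,'a) cfg list" where
  "u1 c r i c' H = (if ok1 c r i c' then (if rec1 c then c # H else H) else [])"
definition u2 :: "('p,'a) cfg \<Rightarrow> ('p,'a) rule \<Rightarrow> nat \<Rightarrow> ('p,'a) cfg \<Rightarrow> ('p,'a) cfg list \<Rightarrow> ('p,'a) cfg list" where
  "u2 c r i c' H = (if ok1 c r i c' \<and> ok2 c r i c' then (if rec2 c then c # H else H) else [])"

inductive D :: "('p,'a) cfg list \<Rightarrow> ('p,'a) cfg list \<Rightarrow> ('p,'a) cfg \<Rightarrow> bool" where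
  Dax: "phase c = 0 \<Longrightarrow> D H1 H2 c"
| Db1: "c \<in> set H1 \<Longrightarrow> D H1 H2 c"
| Db2: "c \<in> set H2 \<Longrightarrow> D H1 H2 c"
| Dstep: "move c = MStep r cs \<Longrightarrow> \<forall>i<length cs. D (u1 c r i (cs!i) H1) (u2 c r i (cs!i) H2) (cs!i)
          \<Longrightarrow> D H1 H2 c"
| Dworld: "phase c = 4 \<Longrightarrow> Box (At a) Y \<in> snd (nd c)
          \<Longrightarrow> D (u1 c (RK (At a) Y) 0 (kchild c a Y) H1) [] (kchild c a Y) \<Longrightarrow> D H1 H2 c"

lemma bad_dec: "bad n \<sigma> \<Longrightarrow> dec \<sigma>"
  unfolding bad_def good_def by blast

lemma bad_in: "bad n \<sigma> \<Longrightarrow> \<sigma> \<in> snd n"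
  unfolding bad_def by blast

lemma chooseL: "\<exists>\<phi>. unsatL n \<phi> \<Longrightarrow> unsatL n (chooseL n)"
  unfolding chooseL_def by (rule someI_ex)
lemma chooseR: "\<exists>\<phi>. unsatR n \<phi> \<Longrightarrow> unsatR n (chooseR n)"
  unfolding chooseR_def by (rule someI_ex)
lemma chooseB: "\<exists>\<sigma>. bad (nd c) \<sigma> \<Longrightarrow> bad (nd c) (chooseB c)"
  unfolding chooseB_def by (auto intro: someI_ex)

lemma phase_cases: "phase c = 0 \<or> phase c = 1 \<or> phase c = 2 \<or> phase c = 3 \<or> phase c = 4"
  unfolding phase_def by auto

lemma phase0: "phase c = 0 \<longleftrightarrow> axiom (nd c)"
  unfolding phase_def by auto

lemma phase4: "phase c = 4 \<longleftrightarrow> \<not> axiom (nd c) \<and> closed (nd c) \<and> \<not> (\<exists>\<tau>. cf1 c = Some \<tau> \<and> dec \<tau>)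
   \<and> \<not> (\<exists>\<sigma>. bad (nd c) \<sigma>)"
  unfolding phase_def by auto

lemma move_world: "move c = MWorld \<longleftrightarrow> phase c = 4"
  unfolding move_def phase_def Let_def by auto

lemma move_ax: "phase c = 0 \<Longrightarrow> \<exists>r. move c = MAx r \<and> rinst r [] (nd c)"
proof -
  assume "phase c = 0"
  then have ax: "axiom (nd c)" by (simp add: phase0)
  obtain G D where n: "nd c = (G, D)" by (cases "nd c")
  show ?thesis
  proof (cases "Bot \<in> G")
    case True
    then have "rinst RBot [] (G, D)" using rinst.bot[of G D] by (simp add: insert_absorb)
    then show ?thesis using ax n True unfolding move_def by auto
  next
    case False
    then have "rinst RAx [] (G, D)" using ax n by (auto simp: axiom_def intro: rinst.ax)
    then show ?thesis using ax n False unfolding move_def by auto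
  qed
qed


lemma move_p1L: "phase c = 1 \<Longrightarrow> \<exists>\<phi>. unsatL (nd c) \<phi> \<Longrightarrow>
  move c = MStep (ruleL (chooseL (nd c))) (map (\<lambda>p. (p, cf1 c, None)) (premsL (chooseL (nd c)) (nd c)))"
  unfolding move_def phase_def Let_def by (auto split: if_splits)

lemma move_p1R: "phase c = 1 \<Longrightarrow> \<not> (\<exists>\<phi>. unsatL (nd c) \<phi>) \<Longrightarrow>
  move c = MStep (ruleR (chooseR (nd c)))
           (map (\<lambda>i. (premsR (chooseR (nd c)) (nd c) ! i,
                      if cf1 c = Some (chooseR (nd c)) then Some (compR (chooseR (nd c)) i) else cf1 c, None))
              [0..<length (premsR (chooseR (nd c)) (nd c))]) \<and> unsatR (nd c) (chooseR (nd c))"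
  unfolding move_def phase_def Let_def
  by (auto split: if_splits intro!: chooseR simp: closed_def)

lemma move_p2: "phase c = 2 \<Longrightarrow> \<exists>\<tau>. cf1 c = Some \<tau> \<and> dec \<tau> \<and>
  move c = MStep (ruleR \<tau>)
         (map (\<lambda>i. (premsR \<tau> (nd c) ! i, Some (compR \<tau> i), None)) [0..<length (premsR \<tau> (nd c))])"
  unfolding move_def phase_def Let_def by (auto split: if_splits)

lemma move_p3: "phase c = 3 \<Longrightarrow> bad (nd c) (chooseB c) \<and>
  move c = MStep (ruleR (chooseB c))
         (map (\<lambda>i. (premsR (chooseB c) (nd c) ! i, cf1 c,
                    if premsR (chooseB c) (nd c) ! i = nd c then Some (compR (chooseB c) i) else None))
            [0..<length (premsR (chooseB c) (nd c))])"
  unfolding move_def phase_def Let_def by (auto split: if_splits intro: chooseB)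

lemma phase2_closed: "phase c = 2 \<Longrightarrow> closed (nd c) \<and> \<not> axiom (nd c)"
  unfolding phase_def by (auto split: if_splits)
lemma phase3_closed: "phase c = 3 \<Longrightarrow> closed (nd c) \<and> \<not> axiom (nd c) \<and> \<not> (\<exists>\<tau>. cf1 c = Some \<tau> \<and> dec \<tau>)"
  unfolding phase_def by (auto split: if_splits)
lemma phase1_nclosed: "phase c = 1 \<Longrightarrow> \<not> closed (nd c) \<and> \<not> axiom (nd c)"
  unfolding phase_def by (auto split: if_splits)

lemma move_MStep_phase: "move c = MStep r cs \<Longrightarrow> phase c = 1 \<or> phase c = 2 \<or> phase c = 3"
  using phase_cases[of c] move_ax[of c] move_world[of c] by auto

definition wfc :: "('p,'a) fm set \<Rightarrow> ('p,'a) cfg \<Rightarrow> bool" where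
  "wfc C c \<longleftrightarrow> fst (nd c) \<subseteq> C \<and> snd (nd c) \<subseteq> C \<and> set_option (cf1 c) \<subseteq> snd (nd c)
     \<and> set_option (cf2 c) \<subseteq> snd (nd c)"

definition clos :: "('p,'a) fm set \<Rightarrow> bool" where
  "clos C \<longleftrightarrow> (\<forall>\<phi>\<in>C. comps \<phi> \<subseteq> C)"

definition f1w :: "('p,'a) cfg \<Rightarrow> ('p,'a) cfg \<Rightarrow> nat \<Rightarrow> bool" where
  "f1w c c' i \<longleftrightarrow> (cf1 c = None \<and> cf1 c' = None) \<or> (\<exists>\<tau>. cf1 c = Some \<tau> \<and> cf1 c' = Some \<tau>) \<or>
     (\<exists>\<tau>. cf1 c = Some \<tau> \<and> dec \<tau> \<and> i < length (premsR \<tau> (nd c)) \<and> nd c' = premsR \<tau> (nd c) ! i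
        \<and> cf1 c' = Some (compR \<tau> i))"

lemma nth_in_set_prems: "i < length (premsR \<phi> n) \<Longrightarrow> premsR \<phi> n ! i \<in> set (premsR \<phi> n)"
  by simp


lemma step_basic:
  assumes m: "move c = MStep r cs" and w: "set_option (cf1 c) \<subseteq> snd (nd c)"
  shows "cs \<noteq> [] \<and> length cs \<le> 2 \<and> rinst r (map fst cs) (nd c) \<and> (\<forall>p f. r \<noteq> RK p f)"
proof -
  consider "phase c = 1" "\<exists>\<phi>. unsatL (nd c) \<phi>" | "phase c = 1" "\<not> (\<exists>\<phi>. unsatL (nd c) \<phi>)"
    | "phase c = 2" | "phase c = 3" using move_MStep_phase[OF m] by blast
  then show ?thesis
  proof cases
    case 1
    let ?\<phi> = "chooseL (nd c)"
    have u: "unsatL (nd c) ?\<phi>" using 1 chooseL by blast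
    have "map fst cs = premsL ?\<phi> (nd c)" using move_p1L[OF 1] m by (simp add: comp_def)
    moreover have "length (premsL ?\<phi> (nd c)) \<le> 2"
      by (cases "nd c"; cases ?\<phi> rule: dec.cases) auto
    ultimately show ?thesis using u move_p1L[OF 1] m premsL_ne[of ?\<phi> "nd c"] rinstL[of ?\<phi> "nd c"]
      ruleL_notK[of ?\<phi>] by (auto simp: unsatL_def)
  next
    case 2
    let ?\<phi> = "chooseR (nd c)"
    have u: "unsatR (nd c) ?\<phi>" using move_p1R[OF 2] by blast
    have "map fst cs = premsR ?\<phi> (nd c)" using move_p1R[OF 2] m by (auto simp: comp_def intro: nth_equalityI)
    then show ?thesis using u move_p1R[OF 2] m premsR_len[of ?\<phi> "nd c"] rinstR[of ?\<phi> "nd c"]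
      ruleR_notK[of ?\<phi>] by (auto simp: unsatR_def)
  next
    case 3
    obtain \<tau> where t: "cf1 c = Some \<tau>" "dec \<tau>" and mm: "move c = MStep (ruleR \<tau>)
         (map (\<lambda>i. (premsR \<tau> (nd c) ! i, Some (compR \<tau> i), None)) [0..<length (premsR \<tau> (nd c))])"
      using move_p2[OF 3] by blast
    have w: "\<tau> \<in> snd (nd c)" using t w by auto
    have "map fst cs = premsR \<tau> (nd c)" using mm m by (auto simp: comp_def intro: nth_equalityI)
    then show ?thesis using t mm m premsR_len[of \<tau> "nd c"] ruleR_notK[of \<tau>] rinstR[OF w t(2)]
      by (auto simp:)
  next
    case 4
    let ?\<sigma> = "chooseB c"
    have b: "bad (nd c) ?\<sigma>" using move_p3[OF 4] by blast
    have "map fst cs = premsR ?\<sigma> (nd c)" using move_p3[OF 4] m by (auto simp: comp_def intro: nth_equalityI)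
    then show ?thesis using b move_p3[OF 4] m premsR_len[of ?\<sigma> "nd c"] rinstR[of ?\<sigma> "nd c"]
      ruleR_notK[of ?\<sigma>] bad_dec[OF b] bad_in[OF b]
      by (auto simp:)
  qed
qed


lemma child_p1L: "phase c = 1 \<Longrightarrow> \<exists>\<phi>. unsatL (nd c) \<phi> \<Longrightarrow> move c = MStep r cs \<Longrightarrow> i < length cs \<Longrightarrow>
  cs ! i = (premsL (chooseL (nd c)) (nd c) ! i, cf1 c, None) \<and> i < length (premsL (chooseL (nd c)) (nd c))
  \<and> r = ruleL (chooseL (nd c)) \<and> unsatL (nd c) (chooseL (nd c))"
  using move_p1L[of c] chooseL[of "nd c"] by auto

lemma child_p1R: "phase c = 1 \<Longrightarrow> \<not> (\<exists>\<phi>. unsatL (nd c) \<phi>) \<Longrightarrow> move c = MStep r cs \<Longrightarrow> i < length cs \<Longrightarrow>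
  cs ! i = (premsR (chooseR (nd c)) (nd c) ! i,
     if cf1 c = Some (chooseR (nd c)) then Some (compR (chooseR (nd c)) i) else cf1 c, None)
  \<and> i < length (premsR (chooseR (nd c)) (nd c))
  \<and> r = ruleR (chooseR (nd c)) \<and> unsatR (nd c) (chooseR (nd c))"
  using move_p1R[of c] by auto

lemma child_p2: "phase c = 2 \<Longrightarrow> move c = MStep r cs \<Longrightarrow> i < length cs \<Longrightarrow>
  \<exists>\<tau>. cf1 c = Some \<tau> \<and> dec \<tau> \<and> cs ! i = (premsR \<tau> (nd c) ! i, Some (compR \<tau> i), None)
   \<and> i < length (premsR \<tau> (nd c)) \<and> r = ruleR \<tau>"
  using move_p2[of c] by auto

lemma child_p3: "phase c = 3 \<Longrightarrow> move c = MStep r cs \<Longrightarrow> i < length cs \<Longrightarrow>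
  cs ! i = (premsR (chooseB c) (nd c) ! i, cf1 c,
                    if premsR (chooseB c) (nd c) ! i = nd c then Some (compR (chooseB c) i) else None)
  \<and> i < length (premsR (chooseB c) (nd c)) \<and> r = ruleR (chooseB c) \<and> bad (nd c) (chooseB c)"
  using move_p3[of c] by auto

lemma step_cases:
  assumes "move c = MStep r cs" "i < length cs"
  obtains (L) "phase c = 1" "\<exists>\<phi>. unsatL (nd c) \<phi>"
      "cs ! i = (premsL (chooseL (nd c)) (nd c) ! i, cf1 c, None)" "i < length (premsL (chooseL (nd c)) (nd c))"
      "r = ruleL (chooseL (nd c))" "unsatL (nd c) (chooseL (nd c))"
  | (R) "phase c = 1" "\<not> (\<exists>\<phi>. unsatL (nd c) \<phi>)"
      "cs ! i = (premsR (chooseR (nd c)) (nd c) ! i,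
         if cf1 c = Some (chooseR (nd c)) then Some (compR (chooseR (nd c)) i) else cf1 c, None)"
      "i < length (premsR (chooseR (nd c)) (nd c))"
      "r = ruleR (chooseR (nd c))" "unsatR (nd c) (chooseR (nd c))"
  | (A) \<tau> where "phase c = 2" "cf1 c = Some \<tau>" "dec \<tau>" "cs ! i = (premsR \<tau> (nd c) ! i, Some (compR \<tau> i), None)"
      "i < length (premsR \<tau> (nd c))" "r = ruleR \<tau>"
  | (B) "phase c = 3" "cs ! i = (premsR (chooseB c) (nd c) ! i, cf1 c,
                    if premsR (chooseB c) (nd c) ! i = nd c then Some (compR (chooseB c) i) else None)"
      "i < length (premsR (chooseB c) (nd c))" "r = ruleR (chooseB c)" "bad (nd c) (chooseB c)"
  using move_MStep_phase[OF assms(1)] child_p1L[OF _ _ assms] child_p1R[OF _ _ assms]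
    child_p2[OF _ assms] child_p3[OF _ assms] by blast

lemma step_sle: assumes "move c = MStep r cs" "i < length cs" shows "sle (nd c) (nd (cs!i))"
  by (rule step_cases[OF assms]) (simp_all, (metis nth_mem premsL_sle premsR_sle)+)

lemma ok1_id: "cf1 c' = cf1 c \<Longrightarrow> (\<And>p f. r \<noteq> RK p f) \<Longrightarrow> ok1 c r i c'"
  by (cases "cf1 c") (auto simp: ok1_def intro: tstep_id)

lemma ok2_id: "cf2 c' = cf2 c \<Longrightarrow> (\<And>p f. r \<noteq> RK p f) \<Longrightarrow> ok2 c r i c'"
  by (cases "cf2 c") (auto simp: ok2_def intro: tstep_id)

lemma step_ok1: "move c = MStep r cs \<Longrightarrow> i < length cs \<Longrightarrow> ok1 c r i (cs!i)"
proof (erule step_cases)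
  assume "cs ! i = (premsL (chooseL (nd c)) (nd c) ! i, cf1 c, None)" "r = ruleL (chooseL (nd c))"
    "unsatL (nd c) (chooseL (nd c))"
  then show "ok1 c r i (cs ! i)" by (auto intro!: ok1_id ruleL_notK simp: unsatL_def)
next
  assume a: "cs ! i = (premsR (chooseR (nd c)) (nd c) ! i,
         if cf1 c = Some (chooseR (nd c)) then Some (compR (chooseR (nd c)) i) else cf1 c, None)"
      "i < length (premsR (chooseR (nd c)) (nd c))"
      "r = ruleR (chooseR (nd c))" "unsatR (nd c) (chooseR (nd c))"
  show "ok1 c r i (cs ! i)"
  proof (cases "cf1 c = Some (chooseR (nd c))")
    case True then show ?thesis using a tstepR[of "chooseR (nd c)" i "nd c"] by (auto simp: ok1_def unsatR_def)
  next
    case False then show ?thesis using a by (auto intro!: ok1_id ruleR_notK simp: unsatR_def)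
  qed
next
  fix \<tau> assume "cf1 c = Some \<tau>" "dec \<tau>" "cs ! i = (premsR \<tau> (nd c) ! i, Some (compR \<tau> i), None)"
      "i < length (premsR \<tau> (nd c))" "r = ruleR \<tau>"
  then show "ok1 c r i (cs ! i)" using tstepR[of \<tau> i "nd c"] by (auto simp: ok1_def)
next
  assume "cs ! i = (premsR (chooseB c) (nd c) ! i, cf1 c,
                    if premsR (chooseB c) (nd c) ! i = nd c then Some (compR (chooseB c) i) else None)"
      "r = ruleR (chooseB c)" "bad (nd c) (chooseB c)"
  then show "ok1 c r i (cs ! i)" by (auto intro!: ok1_id ruleR_notK dest: bad_dec)
qed

lemma step_f1w: "move c = MStep r cs \<Longrightarrow> i < length cs \<Longrightarrow> f1w c (cs!i) i"
proof (erule step_cases)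
qed (auto simp: f1w_def unsatR_def split: if_splits)

lemma wfc_prem: "clos C \<Longrightarrow> wfc C c \<Longrightarrow> \<phi> \<in> fst (nd c) \<union> snd (nd c) \<Longrightarrow>
   p \<in> set (premsR \<phi> (nd c)) \<or> p \<in> set (premsL \<phi> (nd c)) \<Longrightarrow> fst p \<subseteq> C \<and> snd p \<subseteq> C \<and> sle (nd c) p"
proof -
  assume a: "clos C" "wfc C c" "\<phi> \<in> fst (nd c) \<union> snd (nd c)" "p \<in> set (premsR \<phi> (nd c)) \<or> p \<in> set (premsL \<phi> (nd c))"
  have "comps \<phi> \<subseteq> C" using a(1-3) unfolding clos_def wfc_def by blast
  then show ?thesis using a premsR_C[of p \<phi> "nd c" C] premsL_C[of p \<phi> "nd c" C] premsL_sle premsR_sle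
    unfolding wfc_def by blast
qed

lemma step_wfc: "clos C \<Longrightarrow> wfc C c \<Longrightarrow> move c = MStep r cs \<Longrightarrow> i < length cs \<Longrightarrow> wfc C (cs!i)"
proof (erule step_cases)
  assume *: "clos C" "wfc C c"
  {
    assume "cs ! i = (premsL (chooseL (nd c)) (nd c) ! i, cf1 c, None)" "i < length (premsL (chooseL (nd c)) (nd c))"
      "unsatL (nd c) (chooseL (nd c))"
    then show "wfc C (cs ! i)" using * wfc_prem[OF *, of "chooseL (nd c)" "premsL (chooseL (nd c)) (nd c) ! i"]
      by (auto simp: wfc_def unsatL_def sle_def)
  }
  {
    assume "cs ! i = (premsR (chooseR (nd c)) (nd c) ! i,
         if cf1 c = Some (chooseR (nd c)) then Some (compR (chooseR (nd c)) i) else cf1 c, None)"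
      "i < length (premsR (chooseR (nd c)) (nd c))" "unsatR (nd c) (chooseR (nd c))"
    then show "wfc C (cs ! i)" using * wfc_prem[OF *, of "chooseR (nd c)" "premsR (chooseR (nd c)) (nd c) ! i"]
      compR_in[of i "chooseR (nd c)" "nd c"]
      by (auto simp: wfc_def unsatR_def sle_def)
  }
  {
    fix \<tau> assume "cf1 c = Some \<tau>" "cs ! i = (premsR \<tau> (nd c) ! i, Some (compR \<tau> i), None)"
      "i < length (premsR \<tau> (nd c))"
    then show "wfc C (cs ! i)" using * wfc_prem[OF *, of \<tau> "premsR \<tau> (nd c) ! i"] compR_in[of i \<tau> "nd c"]
      by (auto simp: wfc_def sle_def)
  }
  {
    assume "cs ! i = (premsR (chooseB c) (nd c) ! i, cf1 c,
                    if premsR (chooseB c) (nd c) ! i = nd c then Some (compR (chooseB c) i) else None)"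
      "i < length (premsR (chooseB c) (nd c))" "bad (nd c) (chooseB c)"
    then show "wfc C (cs ! i)" using * wfc_prem[OF *, of "chooseB c" "premsR (chooseB c) (nd c) ! i"]
      compR_in[of i "chooseB c" "nd c"] bad_in[of "nd c" "chooseB c"]
      by (auto simp: wfc_def sle_def)
  }
qed

lemma step_p1_grow: "phase c = 1 \<Longrightarrow> move c = MStep r cs \<Longrightarrow> i < length cs \<Longrightarrow> nd (cs!i) \<noteq> nd c"
  by (erule step_cases) (auto simp: unsatL_def unsatR_def)

lemma pstep_bad: "bad n \<sigma> \<Longrightarrow> pstep n \<sigma> \<sigma>' \<Longrightarrow> bad n \<sigma>'"
  unfolding bad_def good_def pstep_def
  by (auto simp: compR_in intro: converse_rtranclp_into_rtranclp[of "pstep n", unfolded pstep_def]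
      dest: compR_in)

lemma step_p2: "phase c = 2 \<Longrightarrow> move c = MStep r cs \<Longrightarrow> i < length cs \<Longrightarrow>
   cf1 (cs!i) \<noteq> cf1 c \<and> cf2 (cs!i) = None \<and> (nd (cs!i) = nd c \<longrightarrow> phase (cs!i) \<ge> 2)"
proof (erule step_cases)
  fix \<tau> assume p: "phase c = 2" and a: "cf1 c = Some \<tau>" "dec \<tau>" "cs ! i = (premsR \<tau> (nd c) ! i, Some (compR \<tau> i), None)"
      "i < length (premsR \<tau> (nd c))"
  have "compR \<tau> i \<noteq> \<tau>" using comps_neq compR_comps a by blast
  moreover have "nd (cs!i) = nd c \<Longrightarrow> phase (cs!i) \<ge> 2"
    using phase2_closed[OF p] unfolding phase_def by auto
  ultimately show ?thesis using a by auto
qed (auto simp: phase_def)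

lemma step_p3: "phase c = 3 \<Longrightarrow> move c = MStep r cs \<Longrightarrow> i < length cs \<Longrightarrow>
   cf1 (cs!i) = cf1 c \<and> (nd (cs!i) = nd c \<longrightarrow> phase (cs!i) = 3 \<and> goodf2 (cs!i))
   \<and> (nd (cs!i) \<noteq> nd c \<longrightarrow> cf2 (cs!i) = None)
   \<and> (goodf2 c \<longrightarrow> nd (cs!i) = nd c \<longrightarrow> ok2 c r i (cs!i) \<and> cf2 (cs!i) \<noteq> cf2 c)"
proof (erule step_cases)
  assume p: "phase c = 3"
    and ci: "cs ! i = (premsR (chooseB c) (nd c) ! i, cf1 c,
                    if premsR (chooseB c) (nd c) ! i = nd c then Some (compR (chooseB c) i) else None)"
    and il: "i < length (premsR (chooseB c) (nd c))" and r: "r = ruleR (chooseB c)"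
    and b: "bad (nd c) (chooseB c)"
  have nob: "\<not> (\<exists>\<tau>. cf1 c = Some \<tau> \<and> dec \<tau>)" "closed (nd c)" "\<not> axiom (nd c)" using phase3_closed[OF p] by auto
  {
    assume eq: "premsR (chooseB c) (nd c) ! i = nd c"
    have ps: "pstep (nd c) (chooseB c) (compR (chooseB c) i)"
      using b eq il bad_dec bad_in unfolding pstep_def by blast
    have b2: "bad (nd c) (compR (chooseB c) i)" by (rule pstep_bad[OF b ps])
    have ph: "phase (cs ! i) = 3" using ci eq nob b2 by (auto simp: phase_def)
    have g: "goodf2 (cs ! i)" using ci eq b2 by (auto simp: goodf2_def)
    have "goodf2 c \<Longrightarrow> ok2 c r i (cs ! i) \<and> cf2 (cs!i) \<noteq> cf2 c"
    proof -
      assume "goodf2 c"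
      then obtain \<sigma>0 where s0: "cf2 c = Some \<sigma>0" "bad (nd c) \<sigma>0" by (auto simp: goodf2_def)
      then have "chooseB c = \<sigma>0" by (auto simp: chooseB_def)
      then show ?thesis using s0 ci eq r il tstepR[of \<sigma>0 i "nd c"] bad_dec[OF s0(2)]
          comps_neq[OF compR_comps[of \<sigma>0 i "nd c"]]
        by (auto simp: ok2_def)
    qed
    note ph g this
  }
  then show ?thesis using ci by auto
qed (auto simp: phase_def)

lemma rec1_change: "rec1 c \<Longrightarrow> move c = MStep r cs \<Longrightarrow> i < length cs \<Longrightarrow> cf1 (cs!i) \<noteq> cf1 c"
proof -
  assume a: "rec1 c" "move c = MStep r cs" "i < length cs"
  then have "phase c = 2" using move_world[of c] by (auto simp: rec1_def)
  then show ?thesis using step_p2 a by blast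
qed

lemma rec2_change: "rec2 c \<Longrightarrow> move c = MStep r cs \<Longrightarrow> i < length cs \<Longrightarrow> ok2 c r i (cs!i) \<Longrightarrow> cf2 (cs!i) \<noteq> cf2 c"
proof -
  assume a: "rec2 c" "move c = MStep r cs" "i < length cs" "ok2 c r i (cs!i)"
  then have p: "phase c = 3" "goodf2 c" by (auto simp: rec2_def)
  show ?thesis
  proof (cases "nd (cs!i) = nd c")
    case True then show ?thesis using step_p3[OF p(1) a(2,3)] p by auto
  next
    case False then have "cf2 (cs!i) = None" using step_p3[OF p(1) a(2,3)] by auto
    then show ?thesis using a(4) p(2) by (auto simp: ok2_def goodf2_def)
  qed
qed

lemma kchild_rinst: "Box (At a) Y \<in> snd (nd c) \<Longrightarrow> rinst (RK (At a) Y) [nd (kchild c a Y)] (nd c)"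
proof -
  assume a: "Box (At a) Y \<in> snd (nd c)"
  obtain G D where n: "nd c = (G, D)" by (cases "nd c")
  have "rinst (RK (At a) Y) [({\<phi>. Box (At a) \<phi> \<in> G}, {Y})] (G \<union> Box (At a) ` {\<phi>. Box (At a) \<phi> \<in> G}, insert (Box (At a) Y) D)"
    by (rule rinst.k)
  moreover have "G \<union> Box (At a) ` {\<phi>. Box (At a) \<phi> \<in> G} = G" by auto
  moreover have "insert (Box (At a) Y) D = D" using a n by auto
  ultimately show ?thesis using n by (simp add: kchild_def)
qed

lemma kchild_wfc: "clos C \<Longrightarrow> wfc C c \<Longrightarrow> Box (At a) Y \<in> snd (nd c) \<Longrightarrow> wfc C (kchild c a Y)"
proof -
  assume a: "clos C" "wfc C c" "Box (At a) Y \<in> snd (nd c)"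
  have "\<And>x. Box (At a) x \<in> C \<Longrightarrow> x \<in> C" using a(1) unfolding clos_def by fastforce
  then show ?thesis using a(2,3) unfolding wfc_def kchild_def by auto
qed

lemma rec1_kchild: "rec1 c \<Longrightarrow> ok1 c (RK (At a) Y) 0 (kchild c a Y) \<Longrightarrow> cf1 (kchild c a Y) \<noteq> cf1 c"
  by (auto simp: ok1_def kchild_def)


definition Cf :: "('p,'a) fm set \<Rightarrow> ('p,'a) cfg set" where "Cf C = {c. wfc C c}"

lemma finite_Cf: "finite C \<Longrightarrow> finite (Cf C)"
proof -
  assume f: "finite C"
  have "Cf C \<subseteq> (Pow C \<times> Pow C) \<times> (insert None (Some ` C)) \<times> (insert None (Some ` C))"
  proof
    fix c assume "c \<in> Cf C"
    then have w: "wfc C c" by (simp add: Cf_def)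
    obtain G D o1 o2 where c: "c = ((G, D), o1, o2)" by (cases c) auto
    have "o1 \<in> insert None (Some ` C)" "o2 \<in> insert None (Some ` C)"
      using w c by (cases o1; cases o2; auto simp: wfc_def)+
    then show "c \<in> (Pow C \<times> Pow C) \<times> (insert None (Some ` C)) \<times> (insert None (Some ` C))"
      using w c by (auto simp: wfc_def)
  qed
  moreover have "finite ((Pow C \<times> Pow C) \<times> (insert None (Some ` C)) \<times> (insert None (Some ` C)))"
    using f by auto
  ultimately show ?thesis by (rule finite_subset)
qed

definition hinv :: "('p,'a) fm set \<Rightarrow> ('p,'a) cfg list \<Rightarrow> ('p,'a) cfg list \<Rightarrow> bool" where
  "hinv C H1 H2 \<longleftrightarrow> distinct H1 \<and> set H1 \<subseteq> Cf C \<and> distinct H2 \<and> set H2 \<subseteq> Cf C"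

definition f1rel :: "('p,'a) cfg \<Rightarrow> ('p,'a) cfg \<Rightarrow> bool" where
  "f1rel c c' \<longleftrightarrow> (cf1 c = None \<and> cf1 c' = None) \<or>
     (\<exists>\<tau> \<tau>'. cf1 c = Some \<tau> \<and> cf1 c' = Some \<tau>' \<and> (pstep (nd c'))\<^sup>*\<^sup>* \<tau> \<tau>')"

definition cosz :: "('p,'a) fm set \<Rightarrow> ('p,'a) sequent \<Rightarrow> nat" where
  "cosz C n = card (C - fst n) + card (C - snd n)"

lemma cosz_less: "finite C \<Longrightarrow> sle n n' \<Longrightarrow> n \<noteq> n' \<Longrightarrow> fst n' \<subseteq> C \<Longrightarrow> snd n' \<subseteq> C \<Longrightarrow> cosz C n' < cosz C n"
proof -
  assume a: "finite C" "sle n n'" "n \<noteq> n'" "fst n' \<subseteq> C" "snd n' \<subseteq> C"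
  have le1: "card (C - fst n') \<le> card (C - fst n)" and le2: "card (C - snd n') \<le> card (C - snd n)"
    using a by (auto simp: sle_def intro!: card_mono)
  have "fst n \<noteq> fst n' \<or> snd n \<noteq> snd n'" using a(3) by (cases n; cases n') auto
  then have "card (C - fst n') < card (C - fst n) \<or> card (C - snd n') < card (C - snd n)"
  proof
    assume "fst n \<noteq> fst n'"
    then have "C - fst n' \<subset> C - fst n" using a by (auto simp: sle_def)
    then show ?thesis using a(1) by (auto intro: psubset_card_mono)
  next
    assume "snd n \<noteq> snd n'"
    then have "C - snd n' \<subset> C - snd n" using a by (auto simp: sle_def)
    then show ?thesis using a(1) by (auto intro: psubset_card_mono)
  qed
  then show ?thesis using le1 le2 unfolding cosz_def by linarith
qed

definition prank :: "('p,'a) cfg \<Rightarrow> nat" where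
  "prank c = (if phase c = 2 then 2 else if phase c = 3 \<and> \<not> goodf2 c then 1 else 0)"

definition proom :: "('p,'a) fm set \<Rightarrow> ('p,'a) cfg \<times> ('p,'a) cfg list \<times> ('p,'a) cfg list \<Rightarrow> nat" where
  "proom C x = (case x of (c, H1, H2) \<Rightarrow>
     if phase c = 2 then card (Cf C) - length H1 else if phase c = 3 then card (Cf C) - length H2 else 0)"

lemma distinct_len_le: "finite A \<Longrightarrow> distinct xs \<Longrightarrow> set xs \<subseteq> A \<Longrightarrow> length xs \<le> card A"
  by (metis card_mono distinct_card)

lemma proc_aux:
  assumes fin: "finite C" and cl: "clos C"
  shows "\<forall>c H1 H2. x = (c, H1, H2) \<longrightarrow> \<not> D H1 H2 c \<longrightarrow> wfc C c \<longrightarrow> hinv C H1 H2 \<longrightarrow>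
    (\<exists>c' H1' H2'. \<not> D H1' H2' c' \<and> phase c' = 4 \<and> wfc C c' \<and> hinv C H1' H2' \<and> sle (nd c) (nd c')
      \<and> (\<exists>H. H1' = H @ H1) \<and> f1rel c c')"
proof (induction x rule: wf_induct[OF wf_measures[of "[\<lambda>(c,H1,H2). cosz C (nd c), \<lambda>(c,H1,H2). prank c, proom C]"]])
  case (1 x)
  show ?case
  proof (intro allI impI)
    fix c H1 H2
    assume x: "x = (c, H1, H2)" and nD: "\<not> D H1 H2 c" and w: "wfc C c" and hi: "hinv C H1 H2"
    have p0: "phase c \<noteq> 0" using nD D.Dax by blast
    have nH1: "c \<notin> set H1" using nD D.Db1 by blast
    have nH2: "c \<notin> set H2" using nD D.Db2 by blast
    show "\<exists>c' H1' H2'. \<not> D H1' H2' c' \<and> phase c' = 4 \<and> wfc C c' \<and> hinv C H1' H2' \<and> sle (nd c) (nd c')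
      \<and> (\<exists>H. H1' = H @ H1) \<and> f1rel c c'"
    proof (cases "phase c = 4")
      case True
      then show ?thesis using nD w hi
        by (intro exI[of _ c] exI[of _ H1] exI[of _ H2]) (auto simp: f1rel_def)
    next
      case False
      then have p123: "phase c = 1 \<or> phase c = 2 \<or> phase c = 3" using p0 phase_cases[of c] by auto
      then obtain r cs where m: "move c = MStep r cs"
        using move_p1L[of c] move_p1R[of c] move_p2[of c] move_p3[of c] by blast
      obtain i where i: "i < length cs" and nDi: "\<not> D (u1 c r i (cs!i) H1) (u2 c r i (cs!i) H2) (cs!i)"
        using nD D.Dstep[OF m] by blast
      define c1 where "c1 = cs ! i"
      define H1a where "H1a = u1 c r i c1 H1"
      define H2a where "H2a = u2 c r i c1 H2"
      have w1: "wfc C c1" unfolding c1_def by (rule step_wfc[OF cl w m i])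
      have ok: "ok1 c r i c1" unfolding c1_def by (rule step_ok1[OF m i])
      have H1a: "H1a = (if rec1 c then c # H1 else H1)" using ok unfolding H1a_def u1_def by simp
      have cCf: "c \<in> Cf C" using w by (simp add: Cf_def)
      have hia: "hinv C H1a H2a" using hi nH1 nH2 cCf unfolding H1a H2a_def u2_def hinv_def by auto
      have sle1: "sle (nd c) (nd c1)" unfolding c1_def by (rule step_sle[OF m i])
      have fw: "f1w c c1 i" unfolding c1_def by (rule step_f1w[OF m i])
      have dec_meas: "((c1, H1a, H2a), x) \<in> measures [\<lambda>(c,H1,H2). cosz C (nd c), \<lambda>(c,H1,H2). prank c, proom C]"
      proof (cases "nd c1 = nd c")
        case False
        have "cosz C (nd c1) < cosz C (nd c)"
          using cosz_less[OF fin sle1 False[symmetric]] w1 by (auto simp: wfc_def)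
        then show ?thesis using x by simp
      next
        case eqn: True
        have np1: "phase c \<noteq> 1" using step_p1_grow[OF _ m i] eqn unfolding c1_def by blast
        show ?thesis
        proof (cases "phase c = 2")
          case p2: True
          have ph1: "phase c1 \<ge> 2" using step_p2[OF p2 m i] eqn unfolding c1_def by auto
          show ?thesis
          proof (cases "phase c1 = 2")
            case True
            have r1: "rec1 c" using p2 by (simp add: rec1_def)
            have "length (c # H1) \<le> card (Cf C)"
              using distinct_len_le[OF finite_Cf[OF fin], of "c # H1"] hi nH1 cCf by (auto simp: hinv_def)
            then have "proom C (c1, H1a, H2a) < proom C (c, H1, H2)"
              using True p2 H1a r1 by (auto simp: proom_def)
            then show ?thesis using x True p2 eqn by (simp add: prank_def)
          next
            case False
            then have "prank c1 < prank c" using p2 ph1 by (auto simp: prank_def)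
            then show ?thesis using x eqn by simp
          qed
        next
          case np2: False
          then have p3: "phase c = 3" using p123 np1 by auto
          have s3: "phase c1 = 3" "goodf2 c1" using step_p3[OF p3 m i] eqn unfolding c1_def by auto
          show ?thesis
          proof (cases "goodf2 c")
            case False
            then have "prank c1 < prank c" using p3 s3 by (auto simp: prank_def)
            then show ?thesis using x eqn by simp
          next
            case g: True
            have ok2: "ok2 c r i c1" using step_p3[OF p3 m i] eqn g unfolding c1_def by auto
            have r2: "rec2 c" using p3 g by (simp add: rec2_def)
            have H2a: "H2a = c # H2" using ok ok2 r2 unfolding H2a_def u2_def by simp
            have "length (c # H2) \<le> card (Cf C)"
              using distinct_len_le[OF finite_Cf[OF fin], of "c # H2"] hi nH2 cCf by (auto simp: hinv_def)
            then have "proom C (c1, H1a, H2a) < proom C (c, H1, H2)"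
              using p3 s3 H2a by (auto simp: proom_def)
            then show ?thesis using x p3 s3 g eqn by (simp add: prank_def)
          qed
        qed
      qed
      obtain c' H1' H2' where IH: "\<not> D H1' H2' c'" "phase c' = 4" "wfc C c'" "hinv C H1' H2'"
        "sle (nd c1) (nd c')" "\<exists>H. H1' = H @ H1a" "f1rel c1 c'"
        using 1[rule_format, OF dec_meas, of c1 H1a H2a] nDi w1 hia
        unfolding c1_def H1a_def H2a_def by blast
      have sle': "sle (nd c) (nd c')" using sle_trans[OF sle1 IH(5)] .
      have "\<exists>H. H1' = H @ H1" using IH(6) H1a by (cases "rec1 c") auto
      moreover have "f1rel c c'"
      proof -
        consider "cf1 c = None" "cf1 c1 = None" | \<tau> where "cf1 c = Some \<tau>" "cf1 c1 = Some \<tau>"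
          | \<tau> where "cf1 c = Some \<tau>" "dec \<tau>" "i < length (premsR \<tau> (nd c))" "nd c1 = premsR \<tau> (nd c) ! i"
             "cf1 c1 = Some (compR \<tau> i)"
          using fw unfolding f1w_def by (elim disjE exE conjE) auto
        then show ?thesis
        proof cases
          case 1 then show ?thesis using IH(7) by (auto simp: f1rel_def)
        next
          case 2 then show ?thesis using IH(7) by (auto simp: f1rel_def)
        next
          case 3
          have tin: "\<tau> \<in> snd (nd c')" using w 3(1) sle' by (auto simp: wfc_def sle_def)
          have "premsR \<tau> (nd c') ! i = nd c'"
            using premsR_mono[OF 3(3) sle'] 3(4) IH(5) by simp
          then have "pstep (nd c') \<tau> (compR \<tau> i)"
            using tin 3(2,3) premsR_len_indep[of \<tau> "nd c" "nd c'"] unfolding pstep_def by auto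
          then show ?thesis using IH(7) 3 by (auto simp: f1rel_def intro: converse_rtranclp_into_rtranclp)
        qed
      qed
      ultimately show ?thesis using IH sle' by blast
    qed
  qed
qed

lemma proc:
  assumes "finite C" "clos C" "\<not> D H1 H2 c" "wfc C c" "hinv C H1 H2"
  shows "\<exists>c' H1' H2'. \<not> D H1' H2' c' \<and> phase c' = 4 \<and> wfc C c' \<and> hinv C H1' H2' \<and> sle (nd c) (nd c')
      \<and> (\<exists>H. H1' = H @ H1) \<and> f1rel c c'"
  using proc_aux[OF assms(1,2), of "(c, H1, H2)"] assms(3-) by blast


lemma closedL: "closed n \<Longrightarrow> \<phi> \<in> fst n \<Longrightarrow> dec \<phi> \<Longrightarrow> n \<in> set (premsL \<phi> n)"
  unfolding closed_def unsatL_def by blast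

lemma closed_impL: assumes "closed n" "Imp f g \<in> fst n" shows "f \<in> snd n \<or> g \<in> fst n"
proof -
  obtain G D where n: "n = (G,D)" by (cases n)
  have "(G,D) \<in> set (premsL (Imp f g) (G,D))" using closedL[OF assms(1) assms(2)] n by simp
  then have "insert f D = D \<or> insert g G = G" by auto
  then show ?thesis using n by (metis insertI1 fst_conv snd_conv)
qed

lemma closed_seqL: assumes "closed n" "Box (Seq p q) f \<in> fst n" shows "Box p (Box q f) \<in> fst n"
proof -
  obtain G D where n: "n = (G,D)" by (cases n)
  have "(G,D) \<in> set (premsL (Box (Seq p q) f) (G,D))" using closedL[OF assms(1) assms(2)] n by simp
  then have "insert (Box p (Box q f)) G = G" by auto
  then show ?thesis using n by (metis insertI1 fst_conv)
qed

lemma closed_choiceL: assumes "closed n" "Box (Choice p q) f \<in> fst n" shows "Box p f \<in> fst n \<and> Box q f \<in> fst n"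
proof -
  obtain G D where n: "n = (G,D)" by (cases n)
  have "(G,D) \<in> set (premsL (Box (Choice p q) f) (G,D))" using closedL[OF assms(1) assms(2)] n by simp
  then have "insert (Box p f) (insert (Box q f) G) = G" by auto
  then show ?thesis using n by (metis insertI1 insert_subset fst_conv subset_insertI)
qed

lemma closed_starL: assumes "closed n" "Box (Star p) f \<in> fst n" shows "f \<in> fst n \<and> Box p (Box (Star p) f) \<in> fst n"
proof -
  obtain G D where n: "n = (G,D)" by (cases n)
  have "(G,D) \<in> set (premsL (Box (Star p) f) (G,D))" using closedL[OF assms(1) assms(2)] n by simp
  then have "insert f (insert (Box p (Box (Star p) f)) G) = G" by auto
  then show ?thesis using n by (metis insertI1 insert_subset fst_conv subset_insertI)
qed

lemma closed_testL: assumes "closed n" "Box (Test g) f \<in> fst n" shows "g \<in> snd n \<or> f \<in> fst n"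
proof -
  obtain G D where n: "n = (G,D)" by (cases n)
  have "(G,D) \<in> set (premsL (Box (Test g) f) (G,D))" using closedL[OF assms(1) assms(2)] n by simp
  then have "insert g D = D \<or> insert f G = G" by auto
  then show ?thesis using n by (metis insertI1 fst_conv snd_conv)
qed

lemma rel_sub: "(\<forall>a. R a \<subseteq> W \<times> W) \<Longrightarrow> rel W R V \<pi> \<subseteq> W \<times> W"
proof (induction \<pi>)
  case (Star p)
  then show ?case by (auto dest: trancl_mono[where s = "W \<times> W"] simp: trancl_subset_Sigma)
qed auto

definition Rm :: "nat set \<Rightarrow> (nat \<Rightarrow> ('p,'a) sequent) \<Rightarrow> 'a \<Rightarrow> (nat \<times> nat) set" where
  "Rm Wn nod a = {(i,j). i \<in> Wn \<and> j \<in> Wn \<and> {\<chi>. Box (At a) \<chi> \<in> fst (nod i)} \<subseteq> fst (nod j)}"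
definition Vm :: "(nat \<Rightarrow> ('p,'a) sequent) \<Rightarrow> nat \<Rightarrow> 'p set" where
  "Vm nod i = {p. Atom p \<in> fst (nod i)}"

definition WS :: "nat set \<Rightarrow> (nat \<Rightarrow> ('p,'a) sequent) \<Rightarrow> nat \<times> ('p,'a) fm \<Rightarrow> nat \<times> ('p,'a) fm \<Rightarrow> bool" where
  "WS Wn nod x y \<longleftrightarrow> (\<exists>i \<phi> \<phi>'. x = (i,\<phi>) \<and> y = (i,\<phi>') \<and> i \<in> Wn \<and> pstep (nod i) \<phi> \<phi>') \<or>
     (\<exists>i j a Y. x = (i, Box (At a) Y) \<and> y = (j, Y) \<and> i \<in> Wn \<and> j \<in> Wn \<and> Box (At a) Y \<in> snd (nod i)
        \<and> {\<chi>. Box (At a) \<chi> \<in> fst (nod i)} \<subseteq> fst (nod j) \<and> Y \<in> snd (nod j))"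

definition termf :: "('p,'a) fm \<Rightarrow> bool" where
  "termf \<phi> \<longleftrightarrow> \<phi> = Bot \<or> (\<exists>p. \<phi> = Atom p)"

locale tmodel =
  fixes Wn :: "nat set" and nod :: "nat \<Rightarrow> ('p,'a) sequent"
  assumes W1: "\<And>i. i \<in> Wn \<Longrightarrow> \<not> axiom (nod i) \<and> closed (nod i)"
  and W2: "\<And>i \<phi>. i \<in> Wn \<Longrightarrow> \<phi> \<in> snd (nod i) \<Longrightarrow>
     \<exists>j \<psi>. (WS Wn nod)\<^sup>*\<^sup>* (i,\<phi>) (j,\<psi>) \<and> termf \<psi> \<and> \<psi> \<in> snd (nod j) \<and> j \<in> Wn"
begin

abbreviation R where "R \<equiv> Rm Wn nod"
abbreviation V where "V \<equiv> Vm nod"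
abbreviation S where "S \<equiv> sat Wn R V"

lemma R_sub: "R a \<subseteq> Wn \<times> Wn" by (auto simp: Rm_def)

lemma relW: "(i,j) \<in> rel Wn R V \<pi> \<Longrightarrow> i \<in> Wn \<and> j \<in> Wn"
  using rel_sub[of R Wn V \<pi>] R_sub by blast

lemma pstep_comps: "pstep n \<phi> \<phi>' \<Longrightarrow> \<phi>' \<in> comps \<phi>"
  unfolding pstep_def using compR_comps by blast

lemma WS_comps: "WS Wn nod (i,\<phi>) (j,\<phi>') \<Longrightarrow> \<phi>' \<in> comps \<phi>"
  unfolding WS_def using pstep_comps by fastforce

lemma WS_fl: "(WS Wn nod)\<^sup>*\<^sup>* (i,\<phi>) (j,\<psi>) \<Longrightarrow> \<phi> \<in> fl \<phi>0 \<Longrightarrow> \<psi> \<in> fl \<phi>0"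
proof (induction rule: rtranclp_induct2)
  case refl then show ?case .
next
  case (step j \<psi> k \<chi>)
  then have "\<psi> \<in> fl \<phi>0" by blast
  moreover have "\<chi> \<in> comps \<psi>" using step(2) by (rule WS_comps)
  ultimately show ?case by (rule fl_closed)
qed

lemma WS_back1:
  assumes "WS Wn nod (i,\<phi>) (j,\<phi>')" "\<forall>s\<in>sides \<phi>. s \<in> fst (nod i) \<longrightarrow> S i s" "\<not> S j \<phi>'"
  shows "\<not> S i \<phi>"
  using assms(1) unfolding WS_def
proof (elim disjE exE conjE)
  fix i0 \<phi>0 \<phi>0' assume a: "(i, \<phi>) = (i0, \<phi>0)" "(j, \<phi>') = (i0, \<phi>0')" "i0 \<in> Wn" "pstep (nod i0) \<phi>0 \<phi>0'"
  then have ij: "j = i" "\<phi>0 = \<phi>" "\<phi>0' = \<phi>'" "i \<in> Wn" "i0 = i" by auto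
  obtain k where k: "k < length (premsR \<phi> (nod i))" "premsR \<phi> (nod i) ! k = nod i" "\<phi>' = compR \<phi> k"
      and d: "dec \<phi>" using a(4) unfolding ij(2,3,5) pstep_def by blast
  obtain G D where n: "nod i = (G, D)" by (cases "nod i")
  show "\<not> S i \<phi>"
    using d
  proof (cases \<phi> rule: dec.cases)
    case (1 f g)
    then have "f \<in> G" "\<phi>' = g" using k n by (auto dest: sym)
    then show ?thesis using assms(2,3) 1 ij n by auto
  next
    case ("3_1" p q f)
    then show ?thesis using assms(3) ij k by auto
  next
    case ("3_2" p q f)
    then show ?thesis using assms(3) ij k by (auto split: if_splits)
  next
    case ("3_3" p f)
    show ?thesis
    proof (cases "k = 0")
      case True then show ?thesis using assms(3) ij k "3_3" by auto
    next
      case False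
      then have "\<phi>' = Box p (Box (Star p) f)" using k "3_3" by auto
      moreover have "(x, y) \<in> rel Wn R V p \<Longrightarrow> (y, z) \<in> rel Wn R V (Star p) \<Longrightarrow> (x, z) \<in> rel Wn R V (Star p)" for x y z
        by (auto intro: trancl_into_trancl2 r_into_trancl)
      ultimately show ?thesis using assms(3) ij "3_3" by auto
    qed
  next
    case ("3_4" g f)
    then have "g \<in> G" "\<phi>' = f" using k n by (auto dest: sym)
    then show ?thesis using assms(2,3) "3_4" ij n by auto
  qed auto
next
  fix i0 j0 a Y assume "(i, \<phi>) = (i0, Box (At a) Y)" "(j, \<phi>') = (j0, Y)" "i0 \<in> Wn" "j0 \<in> Wn"
    "{\<chi>. Box (At a) \<chi> \<in> fst (nod i0)} \<subseteq> fst (nod j0)"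
  then show "\<not> S i \<phi>" using assms(3) by (auto simp: Rm_def)
qed

lemma WS_back:
  assumes "(WS Wn nod)\<^sup>*\<^sup>* (i,\<phi>) (j,\<psi>)" "\<phi> \<in> fl \<phi>0"
    "\<And>k \<chi> s. k \<in> Wn \<Longrightarrow> \<chi> \<in> fl \<phi>0 \<Longrightarrow> s \<in> sides \<chi> \<Longrightarrow> s \<in> fst (nod k) \<Longrightarrow> S k s"
    "\<not> S j \<psi>"
  shows "\<not> S i \<phi>"
  using assms(1,2)
proof (induction rule: converse_rtranclp_induct2)
  case refl then show ?case using assms(4) by simp
next
  case (step i \<phi> k \<chi>)
  have "\<chi> \<in> fl \<phi>0" using step(4) WS_comps[OF step(1)] by (rule fl_closed)
  then have "\<not> S k \<chi>" using step by blast
  moreover have "i \<in> Wn" using step(1) unfolding WS_def by auto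
  ultimately show ?case using WS_back1[OF step(1)] assms(3) step(4) by blast
qed

lemma LB:
  assumes "\<And>g. fsz g < psz \<pi> \<Longrightarrow> \<forall>i\<in>Wn. g \<in> snd (nod i) \<longrightarrow> \<not> S i g"
    "Box \<pi> \<psi> \<in> fst (nod i)" "i \<in> Wn" "(i,j) \<in> rel Wn R V \<pi>"
  shows "\<psi> \<in> fst (nod j)"
  using assms
proof (induction \<pi> arbitrary: \<psi> i j rule: prog.induct[of "\<lambda>_. True"])
  case (At a) then show ?case by (auto simp: Rm_def)
next
  case (Seq p q)
  obtain k where k: "(i,k) \<in> rel Wn R V p" "(k,j) \<in> rel Wn R V q" using Seq.prems(4) by auto
  have Hp: "\<And>g. fsz g < psz p \<Longrightarrow> \<forall>i\<in>Wn. g \<in> snd (nod i) \<longrightarrow> \<not> S i g"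
    using Seq.prems(1) by simp
  have Hq: "\<And>g. fsz g < psz q \<Longrightarrow> \<forall>i\<in>Wn. g \<in> snd (nod i) \<longrightarrow> \<not> S i g"
    using Seq.prems(1) by simp
  have c: "closed (nod i)" using W1 Seq.prems(3) by blast
  have "Box p (Box q \<psi>) \<in> fst (nod i)" by (rule closed_seqL[OF c Seq.prems(2)])
  then have "Box q \<psi> \<in> fst (nod k)" using Seq.IH(1)[OF Hp _ Seq.prems(3) k(1)] by blast
  moreover have "k \<in> Wn" using relW[OF k(1)] by blast
  ultimately show ?case using Seq.IH(2)[OF Hq _ _ k(2)] by blast
next
  case (Choice p q)
  have Hp: "\<And>g. fsz g < psz p \<Longrightarrow> \<forall>i\<in>Wn. g \<in> snd (nod i) \<longrightarrow> \<not> S i g"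
    using Choice.prems(1) by simp
  have Hq: "\<And>g. fsz g < psz q \<Longrightarrow> \<forall>i\<in>Wn. g \<in> snd (nod i) \<longrightarrow> \<not> S i g"
    using Choice.prems(1) by simp
  have c: "closed (nod i)" using W1 Choice.prems(3) by blast
  have b: "Box p \<psi> \<in> fst (nod i)" "Box q \<psi> \<in> fst (nod i)" using closed_choiceL[OF c Choice.prems(2)] by auto
  consider "(i,j) \<in> rel Wn R V p" | "(i,j) \<in> rel Wn R V q" using Choice.prems(4) by auto
  then show ?case
  proof cases
    case 1 then show ?thesis using Choice.IH(1)[OF Hp b(1) Choice.prems(3)] by blast
  next
    case 2 then show ?thesis using Choice.IH(2)[OF Hq b(2) Choice.prems(3)] by blast
  qed
next
  case (Star p)
  have Hp: "\<And>g. fsz g < psz p \<Longrightarrow> \<forall>i\<in>Wn. g \<in> snd (nod i) \<longrightarrow> \<not> S i g"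
    using Star.prems(1) by simp
  have cl: "\<And>k. k \<in> Wn \<Longrightarrow> Box (Star p) \<psi> \<in> fst (nod k) \<Longrightarrow> \<psi> \<in> fst (nod k) \<and> Box p (Box (Star p) \<psi>) \<in> fst (nod k)"
    using closed_starL W1 by blast
  consider "i = j" | "(i,j) \<in> (rel Wn R V p)\<^sup>+" using Star.prems(4) by auto
  then show ?case
  proof cases
    case 1 then show ?thesis using cl Star.prems(2,3) by blast
  next
    case 2
    have "Box (Star p) \<psi> \<in> fst (nod j) \<and> j \<in> Wn" using 2
    proof (induction rule: trancl_induct)
      case (base y)
      have "Box p (Box (Star p) \<psi>) \<in> fst (nod i)" using cl Star.prems(2,3) by blast
      then show ?case using Star.IH[OF Hp _ Star.prems(3) base] relW[OF base] by blast
    next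
      case (step y z)
      have "Box p (Box (Star p) \<psi>) \<in> fst (nod y)" using cl step(3) by blast
      then show ?case using Star.IH[OF Hp _ _ step(2)] step(3) relW[OF step(2)] by blast
    qed
    then show ?thesis using cl by blast
  qed
next
  case (Test g)
  have c: "closed (nod i)" using W1 Test.prems(3) by blast
  have "g \<in> snd (nod i) \<or> \<psi> \<in> fst (nod i)" by (rule closed_testL[OF c Test.prems(2)])
  moreover have "i = j" "S i g" using Test.prems(4) by auto
  moreover have "\<forall>i\<in>Wn. g \<in> snd (nod i) \<longrightarrow> \<not> S i g" using Test.prems(1)[of g] by simp
  ultimately show ?case using Test.prems(3) by blast
qed simp_all

lemma truth: "(\<forall>i\<in>Wn. \<phi> \<in> fst (nod i) \<longrightarrow> S i \<phi>) \<and> (\<forall>i\<in>Wn. \<phi> \<in> snd (nod i) \<longrightarrow> \<not> S i \<phi>)"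
proof (induction "fsz \<phi>" arbitrary: \<phi> rule: less_induct)
  case less
  have left: "S i \<phi>" if i: "i \<in> Wn" "\<phi> \<in> fst (nod i)" for i
  proof (cases \<phi>)
    case Bot then show ?thesis using W1[OF i(1)] i by (auto simp: axiom_def)
  next
    case (Atom p) then show ?thesis using i by (simp add: Vm_def)
  next
    case (Imp f g)
    then have "f \<in> snd (nod i) \<or> g \<in> fst (nod i)" using closed_impL W1 i by blast
    then show ?thesis using less[of f] less[of g] Imp i by auto
  next
    case (Box \<pi> \<psi>)
    have "\<And>g. fsz g < psz \<pi> \<Longrightarrow> \<forall>i\<in>Wn. g \<in> snd (nod i) \<longrightarrow> \<not> S i g"
      using less Box by auto
    then have "\<And>j. (i,j) \<in> rel Wn R V \<pi> \<Longrightarrow> \<psi> \<in> fst (nod j) \<and> j \<in> Wn"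
      using LB i Box relW by blast
    then show ?thesis using less[of \<psi>] Box by auto
  qed
  have right: "\<not> S i \<phi>" if i: "i \<in> Wn" "\<phi> \<in> snd (nod i)" for i
  proof -
    obtain j \<psi> where w: "(WS Wn nod)\<^sup>*\<^sup>* (i,\<phi>) (j,\<psi>)" "termf \<psi>" "\<psi> \<in> snd (nod j)" "j \<in> Wn"
      using W2[OF i] by blast
    have "\<not> S j \<psi>" using w(2-4) W1[OF w(4)] by (auto simp: termf_def axiom_def Vm_def)
    moreover have "\<And>k \<chi> s. k \<in> Wn \<Longrightarrow> \<chi> \<in> fl \<phi> \<Longrightarrow> s \<in> sides \<chi> \<Longrightarrow> s \<in> fst (nod k) \<Longrightarrow> S k s"
      using less fl_sides by blast
    ultimately show ?thesis using WS_back[OF w(1) fl_self] by blast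
  qed
  show ?case using left right by blast
qed

end


lemma nondec_cases: "\<not> dec \<tau> \<Longrightarrow> \<tau> = Bot \<or> (\<exists>p. \<tau> = Atom p) \<or> (\<exists>a Y. \<tau> = Box (At a) Y)"
  by (cases \<tau> rule: dec.cases) auto

lemma pstep_in: "pstep n \<sigma> \<sigma>' \<Longrightarrow> \<sigma>' \<in> snd n"
proof -
  assume "pstep n \<sigma> \<sigma>'"
  then obtain i where "i < length (premsR \<sigma> n)" "premsR \<sigma> n ! i = n" "\<sigma>' = compR \<sigma> i"
    unfolding pstep_def by blast
  then show ?thesis using compR_in[of i \<sigma> n] by simp
qed

lemma pstep_rtc_in: "(pstep n)\<^sup>*\<^sup>* \<sigma> \<sigma>' \<Longrightarrow> \<sigma> \<in> snd n \<Longrightarrow> \<sigma>' \<in> snd n"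
  by (induction rule: rtranclp_induct) (auto dest: pstep_in)

locale cmpl =
  fixes C :: "('p,'a) fm set"
  assumes finC: "finite C" and clC: "clos C"
begin

definition Wset :: "(('p,'a) cfg \<times> ('p,'a) cfg list \<times> ('p,'a) cfg list) set" where
  "Wset = {(c,H1,H2). \<not> D H1 H2 c \<and> phase c = 4 \<and> wfc C c \<and> hinv C H1 H2}"

lemma finite_Wset: "finite Wset"
proof -
  have "Wset \<subseteq> Cf C \<times> {xs. set xs \<subseteq> Cf C \<and> distinct xs} \<times> {xs. set xs \<subseteq> Cf C \<and> distinct xs}"
    unfolding Wset_def hinv_def Cf_def by auto
  moreover have "finite (Cf C \<times> {xs. set xs \<subseteq> Cf C \<and> distinct xs} \<times> {xs. set xs \<subseteq> Cf C \<and> distinct xs})"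
    using finite_Cf[OF finC] finite_subset_distinct[OF finite_Cf[OF finC]]
    by (intro finite_cartesian_product)
  ultimately show ?thesis by (rule finite_subset)
qed

definition ws where "ws = (SOME xs. set xs = Wset \<and> distinct xs)"

lemma ws: "set ws = Wset"
  unfolding ws_def using someI_ex[OF finite_distinct_list[OF finite_Wset]] by blast

definition Wn :: "nat set" where "Wn = {i. i < length ws}"
definition nod :: "nat \<Rightarrow> ('p,'a) sequent" where "nod i = nd (fst (ws ! i))"

lemma in_ws: "w \<in> Wset \<Longrightarrow> \<exists>i\<in>Wn. ws ! i = w"
proof -
  assume "w \<in> Wset"
  then have "w \<in> set ws" using ws by simp
  then obtain i where "i < length ws" "ws ! i = w" by (auto simp: in_set_conv_nth)
  then show ?thesis unfolding Wn_def by blast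
qed

lemma ws_in: "i \<in> Wn \<Longrightarrow> ws ! i \<in> Wset"
proof -
  assume "i \<in> Wn"
  then have "ws ! i \<in> set ws" unfolding Wn_def by simp
  then show ?thesis by (simp only: ws)
qed

lemma W1: "i \<in> Wn \<Longrightarrow> \<not> axiom (nod i) \<and> closed (nod i) \<and> (\<forall>\<sigma>. \<not> bad (nod i) \<sigma>)"
proof -
  assume "i \<in> Wn"
  then have "phase (fst (ws ! i)) = 4" using ws_in[of i] unfolding Wset_def by auto
  then show ?thesis unfolding phase4 nod_def by blast
qed

lemma kstep:
  assumes i: "i \<in> Wn" and b: "Box (At a) Y \<in> snd (nod i)"
  shows "\<exists>j\<in>Wn. WS Wn nod (i, Box (At a) Y) (j, Y) \<and>
     (\<forall>\<tau>. cf1 (fst (ws!i)) = Some (Box (At a) Y) \<longrightarrow>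
        (\<exists>\<tau>'. cf1 (fst (ws!j)) = Some \<tau>' \<and> (pstep (nod j))\<^sup>*\<^sup>* Y \<tau>'
            \<and> length (fst (snd (ws!i))) < length (fst (snd (ws!j)))))
     \<and> (\<exists>\<tau>'. cf1 (fst (ws!j)) = Some \<tau>' \<and> (pstep (nod j))\<^sup>*\<^sup>* Y \<tau>')"
proof -
  obtain c H1 H2 where wi: "ws ! i = (c, H1, H2)" by (cases "ws ! i") auto
  have W: "\<not> D H1 H2 c" "phase c = 4" "wfc C c" "hinv C H1 H2"
    using ws_in[OF i] wi unfolding Wset_def by auto
  have bc: "Box (At a) Y \<in> snd (nd c)" using b wi by (simp add: nod_def)
  define kc where "kc = kchild c a Y"
  define H1a where "H1a = u1 c (RK (At a) Y) 0 kc H1"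
  have nD: "\<not> D H1a [] kc" using W(1) D.Dworld[OF W(2) bc] unfolding H1a_def kc_def by blast
  have wk: "wfc C kc" unfolding kc_def by (rule kchild_wfc[OF clC W(3) bc])
  have nH1: "c \<notin> set H1" using W(1) D.Db1 by blast
  have cCf: "c \<in> Cf C" using W(3) by (simp add: Cf_def)
  have hia: "hinv C H1a []" using W(4) nH1 cCf unfolding H1a_def u1_def hinv_def by auto
  obtain c' H1' H2' where P: "\<not> D H1' H2' c'" "phase c' = 4" "wfc C c'" "hinv C H1' H2'"
    "sle (nd kc) (nd c')" "\<exists>H. H1' = H @ H1a" "f1rel kc c'"
    using proc[OF finC clC nD wk hia] by blast
  obtain j where j: "j \<in> Wn" "ws ! j = (c', H1', H2')" using in_ws[of "(c', H1', H2')"] P(1-4)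
    unfolding Wset_def by auto
  have ndj: "nod j = nd c'" using j by (simp add: nod_def)
  have WSk: "WS Wn nod (i, Box (At a) Y) (j, Y)"
    using P(5) i j(1) b ndj unfolding WS_def kc_def kchild_def sle_def by (auto simp: nod_def wi)
  have fr: "\<exists>\<tau>'. cf1 c' = Some \<tau>' \<and> (pstep (nd c'))\<^sup>*\<^sup>* Y \<tau>'"
    using P(7) unfolding f1rel_def kc_def kchild_def by auto
  have "cf1 c = Some (Box (At a) Y) \<Longrightarrow> length H1 < length H1'"
  proof -
    assume "cf1 c = Some (Box (At a) Y)"
    then have "ok1 c (RK (At a) Y) 0 kc" unfolding ok1_def kc_def kchild_def by auto
    moreover have "rec1 c" using W(2) by (simp add: rec1_def)
    ultimately have "H1a = c # H1" unfolding H1a_def u1_def by simp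
    then show ?thesis using P(6) by auto
  qed
  then show ?thesis using j WSk fr ndj wi by auto
qed

lemma WS_pstep:
  assumes "(pstep (nod j))\<^sup>*\<^sup>* Y \<tau>'" "j \<in> Wn" shows "(WS Wn nod)\<^sup>*\<^sup>* (j,Y) (j,\<tau>')"
  using assms(1)
proof (induction rule: rtranclp_induct)
  case (step y z)
  have "WS Wn nod (j,y) (j,z)" unfolding WS_def using step(2) assms(2) by simp
  with step(3) show ?case by (rule rtranclp.rtrancl_into_rtrancl)
qed simp

lemma kstep2:
  assumes i: "i \<in> Wn" and b: "Box (At a) Y \<in> snd (nod i)"
  obtains j \<tau>' where "j \<in> Wn" "WS Wn nod (i, Box (At a) Y) (j, Y)" "cf1 (fst (ws!j)) = Some \<tau>'"
     "(pstep (nod j))\<^sup>*\<^sup>* Y \<tau>'"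
     "cf1 (fst (ws!i)) = Some (Box (At a) Y) \<longrightarrow> length (fst (snd (ws!i))) < length (fst (snd (ws!j)))"
proof -
  note K = kstep[OF i b]
  from K obtain j where j: "j \<in> Wn" and rest: "WS Wn nod (i, Box (At a) Y) (j, Y) \<and>
     (\<forall>\<tau>. cf1 (fst (ws!i)) = Some (Box (At a) Y) \<longrightarrow>
        (\<exists>\<tau>'. cf1 (fst (ws!j)) = Some \<tau>' \<and> (pstep (nod j))\<^sup>*\<^sup>* Y \<tau>'
            \<and> length (fst (snd (ws!i))) < length (fst (snd (ws!j)))))
     \<and> (\<exists>\<tau>'. cf1 (fst (ws!j)) = Some \<tau>' \<and> (pstep (nod j))\<^sup>*\<^sup>* Y \<tau>')" by (rule bexE)
  from rest have w: "WS Wn nod (i, Box (At a) Y) (j, Y)" by (rule conjunct1)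
  from rest have e: "\<exists>\<tau>'. cf1 (fst (ws!j)) = Some \<tau>' \<and> (pstep (nod j))\<^sup>*\<^sup>* Y \<tau>'" by (simp only:)
  then obtain \<tau>' where t: "cf1 (fst (ws!j)) = Some \<tau>'" "(pstep (nod j))\<^sup>*\<^sup>* Y \<tau>'" by (elim exE conjE)
  have l: "cf1 (fst (ws!i)) = Some (Box (At a) Y) \<longrightarrow> length (fst (snd (ws!i))) < length (fst (snd (ws!j)))"
  proof
    assume h: "cf1 (fst (ws!i)) = Some (Box (At a) Y)"
    from rest have "\<exists>\<tau>'. cf1 (fst (ws!j)) = Some \<tau>' \<and> (pstep (nod j))\<^sup>*\<^sup>* Y \<tau>'
            \<and> length (fst (snd (ws!i))) < length (fst (snd (ws!j)))" using h by (simp only:)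
    then show "length (fst (snd (ws!i))) < length (fst (snd (ws!j)))" by (elim exE conjE)
  qed
  show ?thesis by (rule that[OF j w t l])
qed

lemma chain_aux:
  "\<forall>i\<in>Wn. card (Cf C) - length (fst (snd (ws!i))) = m \<longrightarrow> cf1 (fst (ws!i)) = Some \<tau> \<longrightarrow>
     (\<exists>j \<psi>. (WS Wn nod)\<^sup>*\<^sup>* (i,\<tau>) (j,\<psi>) \<and> termf \<psi> \<and> \<psi> \<in> snd (nod j) \<and> j \<in> Wn)"
proof (induction m arbitrary: \<tau> rule: less_induct)
  case (less m)
  show ?case
  proof (intro ballI impI)
    fix i assume i: "i \<in> Wn" and m: "card (Cf C) - length (fst (snd (ws!i))) = m"
      and t: "cf1 (fst (ws!i)) = Some \<tau>"
    obtain c H1 H2 where wi: "ws ! i = (c, H1, H2)" by (cases "ws ! i") auto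
    have W: "phase c = 4" "wfc C c"
      using ws_in[OF i] wi unfolding Wset_def by auto
    have tin: "\<tau> \<in> snd (nod i)" using W(2) t wi unfolding wfc_def nod_def by auto
    have nd: "\<not> dec \<tau>" using W(1) t wi unfolding phase4 by auto
    consider "\<tau> = Bot \<or> (\<exists>p. \<tau> = Atom p)" | a Y where "\<tau> = Box (At a) Y" using nondec_cases[OF nd] by blast
    then show "\<exists>j \<psi>. (WS Wn nod)\<^sup>*\<^sup>* (i,\<tau>) (j,\<psi>) \<and> termf \<psi> \<and> \<psi> \<in> snd (nod j) \<and> j \<in> Wn"
    proof cases
      case 1 then show ?thesis using tin i unfolding termf_def by blast
    next
      case 2
      have bi: "Box (At a) Y \<in> snd (nod i)" using tin 2 by simp
      obtain j \<tau>' where j0: "j \<in> Wn" "WS Wn nod (i, Box (At a) Y) (j, Y)" "cf1 (fst (ws!j)) = Some \<tau>'"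
        "(pstep (nod j))\<^sup>*\<^sup>* Y \<tau>'" and jl: "cf1 (fst (ws!i)) = Some (Box (At a) Y) \<longrightarrow> length (fst (snd (ws!i))) < length (fst (snd (ws!j)))"
        by (rule kstep2[OF i bi])
      have j5: "length (fst (snd (ws!i))) < length (fst (snd (ws!j)))" using jl t 2 by simp
      note j = j0 j5
      have Hj: "hinv C (fst (snd (ws!j))) (snd (snd (ws!j)))" using ws_in[OF j(1)] unfolding Wset_def by auto
      have "length (fst (snd (ws!j))) \<le> card (Cf C)"
        using distinct_len_le[OF finite_Cf[OF finC]] Hj unfolding hinv_def by blast
      then have lt: "card (Cf C) - length (fst (snd (ws!j))) < m" using m j(5) by linarith
      have IH: "\<forall>i\<in>Wn. card (Cf C) - length (fst (snd (ws!i))) = card (Cf C) - length (fst (snd (ws!j)))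
         \<longrightarrow> cf1 (fst (ws!i)) = Some \<tau>' \<longrightarrow>
         (\<exists>j \<psi>. (WS Wn nod)\<^sup>*\<^sup>* (i,\<tau>') (j,\<psi>) \<and> termf \<psi> \<and> \<psi> \<in> snd (nod j) \<and> j \<in> Wn)"
        by (rule less[OF lt])
      obtain k \<psi> where k: "(WS Wn nod)\<^sup>*\<^sup>* (j,\<tau>') (k,\<psi>)" "termf \<psi>" "\<psi> \<in> snd (nod k)" "k \<in> Wn"
        using IH j(1,3) by blast
      have "(WS Wn nod)\<^sup>*\<^sup>* (j,Y) (j,\<tau>')" by (rule WS_pstep[OF j(4,1)])
      then have "(WS Wn nod)\<^sup>*\<^sup>* (j,Y) (k,\<psi>)" using k(1) by (rule rtranclp_trans)
      then have "(WS Wn nod)\<^sup>*\<^sup>* (i,\<tau>) (k,\<psi>)" using j(2) 2 by (simp add: converse_rtranclp_into_rtranclp)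
      then show ?thesis using k by blast
    qed
  qed
qed

lemma W2: "i \<in> Wn \<Longrightarrow> \<phi> \<in> snd (nod i) \<Longrightarrow>
     \<exists>j \<psi>. (WS Wn nod)\<^sup>*\<^sup>* (i,\<phi>) (j,\<psi>) \<and> termf \<psi> \<and> \<psi> \<in> snd (nod j) \<and> j \<in> Wn"
proof -
  assume i: "i \<in> Wn" and f: "\<phi> \<in> snd (nod i)"
  have "\<not> bad (nod i) \<phi>" using W1[OF i] by blast
  then have "good (nod i) \<phi>" using f unfolding bad_def by blast
  then obtain \<phi>' where p: "(pstep (nod i))\<^sup>*\<^sup>* \<phi> \<phi>'" "\<not> dec \<phi>'" unfolding good_def by blast
  have w1: "(WS Wn nod)\<^sup>*\<^sup>* (i,\<phi>) (i,\<phi>')" by (rule WS_pstep[OF p(1) i])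
  have fin: "\<phi>' \<in> snd (nod i)" using pstep_rtc_in[OF p(1) f] .
  consider "\<phi>' = Bot \<or> (\<exists>p. \<phi>' = Atom p)" | a Y where "\<phi>' = Box (At a) Y" using nondec_cases[OF p(2)] by blast
  then show ?thesis
  proof cases
    case 1 then show ?thesis using w1 fin i unfolding termf_def by blast
  next
    case 2
    have bi: "Box (At a) Y \<in> snd (nod i)" using fin 2 by simp
    obtain j \<tau>' where j: "j \<in> Wn" "WS Wn nod (i, Box (At a) Y) (j, Y)" "cf1 (fst (ws!j)) = Some \<tau>'"
        "(pstep (nod j))\<^sup>*\<^sup>* Y \<tau>'"
      by (rule kstep2[OF i bi])
    have CA: "card (Cf C) - length (fst (snd (ws!j))) = card (Cf C) - length (fst (snd (ws!j))) \<longrightarrow>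
      cf1 (fst (ws!j)) = Some \<tau>' \<longrightarrow>
      (\<exists>k \<psi>. (WS Wn nod)\<^sup>*\<^sup>* (j,\<tau>') (k,\<psi>) \<and> termf \<psi> \<and> \<psi> \<in> snd (nod k) \<and> k \<in> Wn)"
      using chain_aux j(1) by (rule bspec)
    obtain k \<psi> where k: "(WS Wn nod)\<^sup>*\<^sup>* (j,\<tau>') (k,\<psi>)" "termf \<psi>" "\<psi> \<in> snd (nod k)" "k \<in> Wn"
      using CA j(3) by blast
    have "(WS Wn nod)\<^sup>*\<^sup>* (j,Y) (k,\<psi>)" using WS_pstep[OF j(4,1)] k(1) by (rule rtranclp_trans)
    then have "(WS Wn nod)\<^sup>*\<^sup>* (i,Box (At a) Y) (k,\<psi>)" using j(2) by (simp add: converse_rtranclp_into_rtranclp)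
    then have "(WS Wn nod)\<^sup>*\<^sup>* (i,\<phi>) (k,\<psi>)" using w1 2 by (simp add: rtranclp_trans)
    then show ?thesis using k by blast
  qed
qed

sublocale tmodel Wn nod
proof
  fix i assume "i \<in> Wn" then show "\<not> axiom (nod i) \<and> closed (nod i)" using W1 by blast
next
  fix i \<phi> assume "i \<in> Wn" "\<phi> \<in> snd (nod i)"
  then show "\<exists>j \<psi>. (WS Wn nod)\<^sup>*\<^sup>* (i,\<phi>) (j,\<psi>) \<and> termf \<psi> \<and> \<psi> \<in> snd (nod j) \<and> j \<in> Wn" by (rule W2)
qed

lemma countermodel:
  assumes "\<not> D [] [] ((G, Dl), None, None)" "G \<subseteq> C" "Dl \<subseteq> C"
  shows "\<not> valid G Dl"
proof -
  have w: "wfc C ((G, Dl), None, None)" using assms(2,3) unfolding wfc_def by simp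
  have h: "hinv C [] []" unfolding hinv_def by simp
  from proc[OF finC clC assms(1) w h] obtain c' H1' H2' where P: "\<not> D H1' H2' c'" "phase c' = 4" "wfc C c'" "hinv C H1' H2'"
    "sle (nd ((G, Dl), None, None)) (nd c')"
    by (elim exE conjE)
  have "(c', H1', H2') \<in> Wset" unfolding Wset_def using P(1-4) by simp
  then obtain i where i: "i \<in> Wn" "ws ! i = (c', H1', H2')" using in_ws by blast
  have sub: "G \<subseteq> fst (nod i)" "Dl \<subseteq> snd (nod i)" using P(5) i(2) unfolding nod_def sle_def by auto
  have "is_model Wn R V" using i(1) R_sub unfolding is_model_def by blast
  moreover have "\<forall>f\<in>G. S i f" using truth sub i(1) by blast
  moreover have "\<not> (\<exists>g\<in>Dl. S i g)" using truth sub i(1) by blast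
  ultimately show ?thesis using i(1) unfolding valid_def valid_in_def by blast
qed

end


datatype ('p,'a) tr = TN "('p,'a) cfg" "('p,'a) rule" "('p,'a) tr list" | TB "('p,'a) cfg" "nat list" bool

fun cfgt :: "('p,'a) tr \<Rightarrow> ('p,'a) cfg" where
  "cfgt (TN c r ts) = c" | "cfgt (TB c q b) = c"

definition U1 :: "('p,'a) cfg \<Rightarrow> ('p,'a) rule \<Rightarrow> nat \<Rightarrow> ('p,'a) cfg \<Rightarrow> nat list \<Rightarrow> (('p,'a) cfg \<times> nat list) list
   \<Rightarrow> (('p,'a) cfg \<times> nat list) list" where
  "U1 c r i c' p H = (if ok1 c r i c' then (if rec1 c then (c,p) # H else H) else [])"
definition U2 :: "('p,'a) cfg \<Rightarrow> ('p,'a) rule \<Rightarrow> nat \<Rightarrow> ('p,'a) cfg \<Rightarrow> nat list \<Rightarrow> (('p,'a) cfg \<times> nat list) list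
   \<Rightarrow> (('p,'a) cfg \<times> nat list) list" where
  "U2 c r i c' p H = (if ok1 c r i c' \<and> ok2 c r i c' then (if rec2 c then (c,p) # H else H) else [])"

lemma map_U1: "map fst (U1 c r i c' p H) = u1 c r i c' (map fst H)"
  unfolding U1_def u1_def by auto
lemma map_U2: "map fst (U2 c r i c' p H) = u2 c r i c' (map fst H)"
  unfolding U2_def u2_def by auto

inductive DT :: "(('p,'a) cfg \<times> nat list) list \<Rightarrow> (('p,'a) cfg \<times> nat list) list \<Rightarrow> nat list
   \<Rightarrow> ('p,'a) cfg \<Rightarrow> ('p,'a) tr \<Rightarrow> bool" where
  Tax: "move c = MAx r \<Longrightarrow> DT H1 H2 p c (TN c r [])"
| Tb1: "(c, q) \<in> set H1 \<Longrightarrow> DT H1 H2 p c (TB c q True)"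
| Tb2: "(c, q) \<in> set H2 \<Longrightarrow> DT H1 H2 p c (TB c q False)"
| Tstep: "move c = MStep r cs \<Longrightarrow> length ts = length cs \<Longrightarrow>
    \<forall>i<length cs. DT (U1 c r i (cs!i) p H1) (U2 c r i (cs!i) p H2) (i#p) (cs!i) (ts!i)
    \<Longrightarrow> DT H1 H2 p c (TN c r ts)"
| Tworld: "phase c = 4 \<Longrightarrow> Box (At a) Y \<in> snd (nd c) \<Longrightarrow>
    DT (U1 c (RK (At a) Y) 0 (kchild c a Y) p H1) [] (0#p) (kchild c a Y) t
    \<Longrightarrow> DT H1 H2 p c (TN c (RK (At a) Y) [t])"

lemma DT_cfgt: "DT H1 H2 p c t \<Longrightarrow> cfgt t = c"
  by (induction rule: DT.induct) auto

lemma D_DT: "D H1 H2 c \<Longrightarrow> \<forall>HP1 HP2 p. map fst HP1 = H1 \<longrightarrow> map fst HP2 = H2 \<longrightarrow> (\<exists>t. DT HP1 HP2 p c t)"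
proof (induction rule: D.induct)
  case (Dax c H1 H2)
  then obtain r where "move c = MAx r" using move_ax by blast
  then show ?case using DT.Tax by blast
next
  case (Db1 c H1 H2)
  show ?case
  proof (intro allI impI)
    fix HP1 HP2 :: "(('a,'b) cfg \<times> nat list) list" and p
    assume "map fst HP1 = H1" "map fst HP2 = H2"
    then obtain q where "(c,q) \<in> set HP1" using Db1 by force
    then show "\<exists>t. DT HP1 HP2 p c t" using DT.Tb1 by blast
  qed
next
  case (Db2 c H2 H1)
  show ?case
  proof (intro allI impI)
    fix HP1 HP2 :: "(('a,'b) cfg \<times> nat list) list" and p
    assume "map fst HP1 = H1" "map fst HP2 = H2"
    then obtain q where "(c,q) \<in> set HP2" using Db2 by force
    then show "\<exists>t. DT HP1 HP2 p c t" using DT.Tb2 by blast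
  qed
next
  case (Dstep c r cs H1 H2)
  show ?case
  proof (intro allI impI)
    fix HP1 HP2 :: "(('a,'b) cfg \<times> nat list) list" and p
    assume h: "map fst HP1 = H1" "map fst HP2 = H2"
    have "\<forall>i. \<exists>t. i < length cs \<longrightarrow> DT (U1 c r i (cs!i) p HP1) (U2 c r i (cs!i) p HP2) (i#p) (cs!i) t"
      using Dstep(2) h map_U1 map_U2 by metis
    then obtain F where F: "\<forall>i. i < length cs \<longrightarrow> DT (U1 c r i (cs!i) p HP1) (U2 c r i (cs!i) p HP2) (i#p) (cs!i) (F i)"
      by (metis choice)
    have "DT HP1 HP2 p c (TN c r (map F [0..<length cs]))"
      by (rule DT.Tstep[OF Dstep(1)]) (use F in auto)
    then show "\<exists>t. DT HP1 HP2 p c t" by blast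
  qed
next
  case (Dworld c a Y H1 H2)
  show ?case
  proof (intro allI impI)
    fix HP1 HP2 :: "(('a,'b) cfg \<times> nat list) list" and p
    assume h: "map fst HP1 = H1" "map fst HP2 = H2"
    obtain t where "DT (U1 c (RK (At a) Y) 0 (kchild c a Y) p HP1) [] (0#p) (kchild c a Y) t"
      using Dworld(4) h map_U1 by (metis list.map(1))
    then show "\<exists>t. DT HP1 HP2 p c t" using DT.Tworld[OF Dworld(1,2)] by blast
  qed
qed

fun sub :: "('p,'a) tr \<Rightarrow> nat list \<Rightarrow> ('p,'a) tr option" where
  "sub t [] = Some t"
| "sub t (i # p) = (case sub t p of Some (TN c r ts) \<Rightarrow> if i < length ts then Some (ts ! i) else None | _ \<Rightarrow> None)"

lemma sub_append: "sub t (p @ [i]) = (case t of TN c r ts \<Rightarrow> if i < length ts then sub (ts ! i) p else None | _ \<Rightarrow> None)"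
  by (induction p) (auto split: tr.splits option.splits)

definition poss :: "('p,'a) tr \<Rightarrow> nat list set" where "poss t = {p. sub t p \<noteq> None}"

lemma poss_TN: "poss (TN c r ts) = insert [] (\<Union>i\<in>{..<length ts}. (\<lambda>p. p @ [i]) ` poss (ts ! i))"
proof (rule set_eqI)
  fix p show "p \<in> poss (TN c r ts) \<longleftrightarrow> p \<in> insert [] (\<Union>i\<in>{..<length ts}. (\<lambda>p. p @ [i]) ` poss (ts ! i))"
    by (cases p rule: rev_cases) (auto simp: poss_def sub_append)
qed

lemma poss_TB: "poss (TB c q b) = {[]}"
proof (rule set_eqI)
  fix p show "p \<in> poss (TB c q b) \<longleftrightarrow> p \<in> {[]}"
    by (cases p rule: rev_cases) (auto simp: poss_def sub_append)
qed

lemma finite_poss: "finite (poss t)"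
proof (induction t)
  case (TN c r ts)
  then show ?case by (simp add: poss_TN)
next
  case (TB c q b) then show ?case by (simp add: poss_TB)
qed

lemma sub_parent: "sub t (i # p) = Some s \<Longrightarrow> \<exists>c r ts. sub t p = Some (TN c r ts) \<and> i < length ts \<and> ts ! i = s"
  by (auto split: option.splits tr.splits if_splits)


lemma DT_TN_cases:
  assumes "DT H1 H2 p c (TN c' r ts)"
  shows "c' = c \<and> ((move c = MAx r \<and> ts = []) \<or>
    (\<exists>cs. move c = MStep r cs \<and> length ts = length cs \<and>
        (\<forall>i<length cs. DT (U1 c r i (cs!i) p H1) (U2 c r i (cs!i) p H2) (i#p) (cs!i) (ts!i))) \<or>
    (\<exists>a Y t. phase c = 4 \<and> Box (At a) Y \<in> snd (nd c) \<and> r = RK (At a) Y \<and> ts = [t] \<and>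
        DT (U1 c (RK (At a) Y) 0 (kchild c a Y) p H1) [] (0#p) (kchild c a Y) t))"
  using assms by (cases rule: DT.cases) auto

lemma DT_TB_cases:
  assumes "DT H1 H2 p c (TB c' q b)"
  shows "c' = c \<and> (b \<longrightarrow> (c,q) \<in> set H1) \<and> (\<not> b \<longrightarrow> (c,q) \<in> set H2)"
  using assms by (cases rule: DT.cases) auto

inductive pathok :: "(nat list \<Rightarrow> nat \<Rightarrow> bool) \<Rightarrow> nat list \<Rightarrow> nat list \<Rightarrow> bool" for e where
  prefl: "pathok e q q"
| pcons: "pathok e q p \<Longrightarrow> e p i \<Longrightarrow> pathok e q (i # p)"

lemma pathok_suffix: "pathok e q p \<Longrightarrow> \<exists>xs. p = xs @ q"
  by (induction rule: pathok.induct) (auto intro: exI[of _ "_ # _"])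

lemma pathok_len: "pathok e q p \<Longrightarrow> length q \<le> length p"
  using pathok_suffix by fastforce

definition e1 :: "('p,'a) tr \<Rightarrow> nat list \<Rightarrow> nat \<Rightarrow> bool" where
  "e1 T p i \<longleftrightarrow> (\<exists>c r ts. sub T p = Some (TN c r ts) \<and> i < length ts \<and> ok1 c r i (cfgt (ts!i)))"
definition e2 :: "('p,'a) tr \<Rightarrow> nat list \<Rightarrow> nat \<Rightarrow> bool" where
  "e2 T p i \<longleftrightarrow> (\<exists>c r ts. sub T p = Some (TN c r ts) \<and> i < length ts \<and> ok1 c r i (cfgt (ts!i))
     \<and> ok2 c r i (cfgt (ts!i)))"

definition histok :: "('p,'a) tr \<Rightarrow> nat list \<Rightarrow> (('p,'a) cfg \<times> nat list) list \<Rightarrow> (('p,'a) cfg \<times> nat list) list \<Rightarrow> bool" where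
  "histok T p HP1 HP2 \<longleftrightarrow>
     (\<forall>(c,q)\<in>set HP1. q \<noteq> p \<and> pathok (e1 T) q p \<and> (\<exists>r ts. sub T q = Some (TN c r ts)) \<and> rec1 c) \<and>
     (\<forall>(c,q)\<in>set HP2. q \<noteq> p \<and> pathok (e2 T) q p \<and> (\<exists>r ts. sub T q = Some (TN c r ts)) \<and> rec2 c)"

locale snd_loc =
  fixes C :: "('p,'a) fm set" and c0 :: "('p,'a) cfg" and T :: "('p,'a) tr"
  assumes finC: "finite C" and clC: "clos C" and w0: "wfc C c0" and DT0: "DT [] [] [] c0 T"
begin

lemma histok_step:
  assumes h: "histok T p HP1 HP2" and s: "sub T p = Some (TN c r ts)" and i: "i < length ts"
    and cf: "cfgt (ts!i) = c'"
  shows "histok T (i#p) (U1 c r i c' p HP1) (U2 c r i c' p HP2)"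
proof -
  have E1: "ok1 c r i c' \<Longrightarrow> e1 T p i" using s i cf unfolding e1_def by auto
  have E2: "ok1 c r i c' \<Longrightarrow> ok2 c r i c' \<Longrightarrow> e2 T p i" using s i cf unfolding e2_def by auto
  have A1: "\<forall>(c0,q)\<in>set (U1 c r i c' p HP1). q \<noteq> i#p \<and> pathok (e1 T) q (i#p) \<and> (\<exists>r ts. sub T q = Some (TN c0 r ts)) \<and> rec1 c0"
  proof (cases "ok1 c r i c'")
    case True
    have old: "\<forall>(c0,q)\<in>set HP1. q \<noteq> i#p \<and> pathok (e1 T) q (i#p) \<and> (\<exists>r ts. sub T q = Some (TN c0 r ts)) \<and> rec1 c0"
    proof (intro ballI, clarify)
      fix c0 q assume "(c0,q) \<in> set HP1"
      then have a: "pathok (e1 T) q p" "(\<exists>r ts. sub T q = Some (TN c0 r ts))" "rec1 c0"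
        using h unfolding histok_def by auto
      have "pathok (e1 T) q (i#p)" using pathok.pcons[OF a(1) E1[OF True]] .
      moreover have "q \<noteq> i#p" using pathok_len[OF a(1)] by auto
      ultimately show "q \<noteq> i#p \<and> pathok (e1 T) q (i#p) \<and> (\<exists>r ts. sub T q = Some (TN c0 r ts)) \<and> rec1 c0"
        using a by blast
    qed
    have new: "rec1 c \<Longrightarrow> p \<noteq> i#p \<and> pathok (e1 T) p (i#p) \<and> (\<exists>r' ts'. sub T p = Some (TN c r' ts')) \<and> rec1 c"
      using s pathok.pcons[OF pathok.prefl[of "e1 T" p] E1[OF True]] by auto
    show ?thesis using True old new unfolding U1_def by auto
  next
    case False then show ?thesis unfolding U1_def by simp
  qed
  have A2: "\<forall>(c0,q)\<in>set (U2 c r i c' p HP2). q \<noteq> i#p \<and> pathok (e2 T) q (i#p) \<and> (\<exists>r ts. sub T q = Some (TN c0 r ts)) \<and> rec2 c0"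
  proof (cases "ok1 c r i c' \<and> ok2 c r i c'")
    case True
    have old: "\<forall>(c0,q)\<in>set HP2. q \<noteq> i#p \<and> pathok (e2 T) q (i#p) \<and> (\<exists>r ts. sub T q = Some (TN c0 r ts)) \<and> rec2 c0"
    proof (intro ballI, clarify)
      fix c0 q assume "(c0,q) \<in> set HP2"
      then have a: "pathok (e2 T) q p" "(\<exists>r ts. sub T q = Some (TN c0 r ts))" "rec2 c0"
        using h unfolding histok_def by auto
      have "pathok (e2 T) q (i#p)" using pathok.pcons[OF a(1) E2] True by blast
      moreover have "q \<noteq> i#p" using pathok_len[OF a(1)] by auto
      ultimately show "q \<noteq> i#p \<and> pathok (e2 T) q (i#p) \<and> (\<exists>r ts. sub T q = Some (TN c0 r ts)) \<and> rec2 c0"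
        using a by blast
    qed
    have new: "rec2 c \<Longrightarrow> p \<noteq> i#p \<and> pathok (e2 T) p (i#p) \<and> (\<exists>r' ts'. sub T p = Some (TN c r' ts')) \<and> rec2 c"
      using s pathok.pcons[OF pathok.prefl[of "e2 T" p] E2] True by auto
    show ?thesis using True old new unfolding U2_def by auto
  next
    case False then show ?thesis unfolding U2_def by auto
  qed
  show ?thesis using A1 A2 unfolding histok_def by blast
qed

lemma inv:
  "sub T p = Some s \<Longrightarrow> \<exists>HP1 HP2. DT HP1 HP2 p (cfgt s) s \<and> histok T p HP1 HP2 \<and> wfc C (cfgt s)"
proof (induction p arbitrary: s)
  case Nil
  then have "s = T" by simp
  moreover have "histok T [] [] []" unfolding histok_def by simp
  ultimately show ?case using DT0 DT_cfgt[OF DT0] w0 by auto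
next
  case (Cons i p)
  obtain c r ts where s: "sub T p = Some (TN c r ts)" "i < length ts" "ts ! i = s"
    using sub_parent[OF Cons.prems] by blast
  obtain HP1 HP2 where IH: "DT HP1 HP2 p c (TN c r ts)" "histok T p HP1 HP2" "wfc C c"
    using Cons.IH[OF s(1)] by auto
  from DT_TN_cases[OF IH(1)] consider "move c = MAx r" "ts = []"
    | cs where "move c = MStep r cs" "length ts = length cs"
        "\<forall>i<length cs. DT (U1 c r i (cs!i) p HP1) (U2 c r i (cs!i) p HP2) (i#p) (cs!i) (ts!i)"
    | a Y t where "phase c = 4" "Box (At a) Y \<in> snd (nd c)" "r = RK (At a) Y" "ts = [t]"
        "DT (U1 c (RK (At a) Y) 0 (kchild c a Y) p HP1) [] (0#p) (kchild c a Y) t"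
    by blast
  then show ?case
  proof cases
    case 1 then show ?thesis using s by simp
  next
    case 2
    have d: "DT (U1 c r i (cs!i) p HP1) (U2 c r i (cs!i) p HP2) (i#p) (cs!i) s"
      using 2(3) s 2(2) by auto
    have cf: "cfgt s = cs ! i" using DT_cfgt[OF d] .
    have "histok T (i#p) (U1 c r i (cs!i) p HP1) (U2 c r i (cs!i) p HP2)"
      using histok_step[OF IH(2) s(1,2)] cf s(3) by simp
    moreover have "wfc C (cs ! i)" using step_wfc[OF clC IH(3) 2(1)] s(2) 2(2) by simp
    ultimately show ?thesis using d cf by auto
  next
    case 3
    have i0: "i = 0" "s = t" using s 3(4) by auto
    have d: "DT (U1 c (RK (At a) Y) 0 (kchild c a Y) p HP1) [] (i#p) (kchild c a Y) s" using 3(5) i0 by simp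
    have cf: "cfgt s = kchild c a Y" using DT_cfgt[OF d] .
    have "histok T (i#p) (U1 c (RK (At a) Y) 0 (kchild c a Y) p HP1) (U2 c (RK (At a) Y) 0 (kchild c a Y) p [])"
      using histok_step[OF _ s(1,2), of HP1 "[]"] IH(2) cf s(3) 3(3) i0 unfolding histok_def by auto
    moreover have "U2 c (RK (At a) Y) 0 (kchild c a Y) p [] = []" using 3(1) unfolding U2_def rec2_def by simp
    moreover have "wfc C (kchild c a Y)" by (rule kchild_wfc[OF clC IH(3) 3(2)])
    ultimately show ?thesis using d cf by auto
  qed
qed

end


lemma move_MAx_phase: "move c = MAx r \<Longrightarrow> phase c = 0"
proof -
  assume m: "move c = MAx r"
  show "phase c = 0"
  proof (rule ccontr)
    assume "phase c \<noteq> 0"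
    then have "phase c = 1 \<or> phase c = 2 \<or> phase c = 3 \<or> phase c = 4" using phase_cases[of c] by auto
    then show False using m move_p1L[of c] move_p1R[of c] move_p2[of c] move_p3[of c] move_world[of c] by auto
  qed
qed

lemma move_MAx: "move c = MAx r \<Longrightarrow> rinst r [] (nd c) \<and> (r = RAx \<or> r = RBot)"
proof -
  assume m: "move c = MAx r"
  have "phase c = 0" using move_MAx_phase[OF m] .
  then show ?thesis using m move_ax[of c] unfolding move_def by (auto simp: phase0 Let_def split: if_splits)
qed

lemma ruleL_nocut: "ruleL \<phi> \<noteq> RCut f" by (cases \<phi> rule: dec.cases) auto
lemma ruleR_nocut: "ruleR \<phi> \<noteq> RCut f" by (cases \<phi> rule: dec.cases) auto

lemma move_nocut: "move c = MStep r cs \<Longrightarrow> r \<noteq> RCut f"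
  using move_MStep_phase[of c r cs] move_p1L[of c] move_p1R[of c] move_p2[of c] move_p3[of c]
    ruleL_nocut ruleR_nocut by fastforce

context snd_loc
begin

definition PP :: "('p,'a) preproof" where
  "PP = \<lparr>nodes = to_nat ` poss T, root = to_nat ([] :: nat list),
         lab = (\<lambda>n. nd (cfgt (the (sub T (from_nat n))))),
         kind = (\<lambda>n. case the (sub T (from_nat n)) of
                    TN c r ts \<Rightarrow> Inner r (map (\<lambda>i. to_nat (i # (from_nat n :: nat list))) [0..<length ts])
                  | TB c q b \<Rightarrow> Bud (to_nat q))\<rparr>"

lemma PP_simps: "nodes PP = to_nat ` poss T" "root PP = to_nat ([] :: nat list)"
  unfolding PP_def by simp_all

lemma kind_TN: "sub T p = Some (TN c r ts) \<Longrightarrow> kind PP (to_nat p) = Inner r (map (\<lambda>i. to_nat (i # p)) [0..<length ts])"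
  unfolding PP_def by simp

lemma kind_TB: "sub T p = Some (TB c q b) \<Longrightarrow> kind PP (to_nat p) = Bud (to_nat q)"
  unfolding PP_def by simp

lemma lab_sub: "sub T p = Some s \<Longrightarrow> lab PP (to_nat p) = nd (cfgt s)"
  unfolding PP_def by simp

lemma node_cases: "n \<in> nodes PP \<Longrightarrow> \<exists>p s. n = to_nat p \<and> sub T p = Some s"
  unfolding PP_def poss_def by auto

lemma local_TN:
  assumes "sub T p = Some (TN c r ts)"
  shows "wfc C c \<and> rinst r (map (nd \<circ> cfgt) ts) (nd c) \<and> (\<forall>f. r \<noteq> RCut f)
    \<and> ((move c = MAx r \<and> ts = []) \<or>
       (\<exists>cs. move c = MStep r cs \<and> length ts = length cs \<and> (\<forall>i<length ts. cfgt (ts!i) = cs!i)) \<or>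
       (\<exists>a Y t. phase c = 4 \<and> Box (At a) Y \<in> snd (nd c) \<and> r = RK (At a) Y \<and> ts = [t] \<and> cfgt t = kchild c a Y))"
proof -
  obtain HP1 HP2 where I: "DT HP1 HP2 p c (TN c r ts)" "wfc C c"
    using inv[OF assms] by auto
  from DT_TN_cases[OF I(1)] consider "move c = MAx r" "ts = []"
    | cs where "move c = MStep r cs" "length ts = length cs"
        "\<forall>i<length cs. DT (U1 c r i (cs!i) p HP1) (U2 c r i (cs!i) p HP2) (i#p) (cs!i) (ts!i)"
    | a Y t where "phase c = 4" "Box (At a) Y \<in> snd (nd c)" "r = RK (At a) Y" "ts = [t]"
        "DT (U1 c (RK (At a) Y) 0 (kchild c a Y) p HP1) [] (0#p) (kchild c a Y) t"
    by blast
  then show ?thesis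
  proof cases
    case 1 then show ?thesis using move_MAx[OF 1(1)] I(2) by auto
  next
    case 2
    have cf: "\<forall>i<length ts. cfgt (ts!i) = cs!i" using 2(2,3) DT_cfgt by fastforce
    have "map (nd \<circ> cfgt) ts = map fst cs" using cf 2(2) by (auto intro: nth_equalityI)
    moreover have "rinst r (map fst cs) (nd c)" using step_basic[OF 2(1)] I(2) unfolding wfc_def by blast
    ultimately show ?thesis using I(2) 2 cf move_nocut[OF 2(1)] by auto
  next
    case 3
    have cf: "cfgt t = kchild c a Y" using DT_cfgt[OF 3(5)] .
    then show ?thesis using I(2) 3 kchild_rinst[OF 3(2)] by auto
  qed
qed

lemma local_TB:
  assumes "sub T p = Some (TB c q b)"
  shows "q \<noteq> p \<and> (\<exists>r ts. sub T q = Some (TN c r ts) \<and> ts \<noteq> []) \<and>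
    (b \<longrightarrow> pathok (e1 T) q p \<and> rec1 c) \<and> (\<not> b \<longrightarrow> pathok (e2 T) q p \<and> rec2 c)"
proof -
  obtain HP1 HP2 where I: "DT HP1 HP2 p c (TB c q b)" "histok T p HP1 HP2"
    using inv[OF assms] by auto
  have h: "(b \<longrightarrow> (c,q) \<in> set HP1) \<and> (\<not> b \<longrightarrow> (c,q) \<in> set HP2)" using DT_TB_cases[OF I(1)] by blast
  then have A: "q \<noteq> p \<and> (\<exists>r ts. sub T q = Some (TN c r ts)) \<and>
    (b \<longrightarrow> pathok (e1 T) q p \<and> rec1 c) \<and> (\<not> b \<longrightarrow> pathok (e2 T) q p \<and> rec2 c)"
    using I(2) unfolding histok_def by (cases b) auto
  then obtain r ts where s: "sub T q = Some (TN c r ts)" by blast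
  have ph: "phase c = 2 \<or> phase c = 3 \<or> phase c = 4" using A by (cases b) (auto simp: rec1_def rec2_def)
  have "ts \<noteq> []"
  proof
    assume "ts = []"
    then have "move c = MAx r \<or> (\<exists>cs. move c = MStep r cs \<and> cs = [])" using local_TN[OF s] by auto
    then show False using ph move_MAx_phase[of c r] step_basic[of c r "[]"] local_TN[OF s]
      by (auto simp: wfc_def)
  qed
  then show ?thesis using A s by blast
qed

lemma PPa: "finite (nodes PP)" unfolding PP_simps by (intro finite_imageI finite_poss)
lemma PPb: "root PP \<in> nodes PP" unfolding PP_simps poss_def by simp

lemma PPc: "\<forall>n\<in>nodes PP. finite (fst (lab PP n)) \<and> finite (snd (lab PP n))"
proof
  fix n assume "n \<in> nodes PP"
  then obtain p s where ps: "n = to_nat p" "sub T p = Some s" using node_cases by blast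
  have w: "wfc C (cfgt s)" using inv[OF ps(2)] by auto
  have l: "lab PP n = nd (cfgt s)" using lab_sub[OF ps(2)] ps(1) by simp
  show "finite (fst (lab PP n)) \<and> finite (snd (lab PP n))"
    using w l finite_subset[OF _ finC] unfolding wfc_def by auto
qed

lemma PPd: "\<forall>n\<in>nodes PP. \<forall>r cs. kind PP n = Inner r cs \<longrightarrow> set cs \<subseteq> nodes PP"
proof (intro ballI allI impI)
  fix n r cs assume n: "n \<in> nodes PP" and k: "kind PP n = Inner r cs"
  then obtain p s where ps: "n = to_nat p" "sub T p = Some s" using node_cases by blast
  show "set cs \<subseteq> nodes PP"
  proof (cases s)
    case (TN c r' ts)
    then have "cs = map (\<lambda>i. to_nat (i # p)) [0..<length ts]" using k kind_TN ps by auto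
    then show ?thesis using ps TN unfolding PP_simps poss_def by auto
  next
    case (TB c q b) then show ?thesis using k kind_TB ps by auto
  qed
qed

lemma PPe: "\<forall>n\<in>nodes PP. (root PP, n) \<in> (child_edges PP)\<^sup>*"
proof
  fix n assume "n \<in> nodes PP"
  then obtain p s where ps: "n = to_nat p" "sub T p = Some s" using node_cases by blast
  have "(root PP, to_nat p) \<in> (child_edges PP)\<^sup>*" using ps(2)
  proof (induction p arbitrary: s)
    case Nil show ?case unfolding PP_simps by (rule rtrancl_refl)
  next
    case (Cons i p)
    obtain c r ts where s: "sub T p = Some (TN c r ts)" "i < length ts" "ts ! i = s"
      using sub_parent[OF Cons.prems] by blast
    have "(to_nat p, to_nat (i#p)) \<in> child_edges PP"
      using s kind_TN[OF s(1)] unfolding child_edges_def PP_simps poss_def by force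
    then show ?case by (rule rtrancl_into_rtrancl[OF Cons.IH[OF s(1)]])
  qed
  then show "(root PP, n) \<in> (child_edges PP)\<^sup>*" using ps by simp
qed

lemma child_nat: "n \<in> nodes PP \<Longrightarrow> kind PP n = Inner r cs \<Longrightarrow> i < length cs \<Longrightarrow>
   \<exists>p. n = to_nat p \<and> cs ! i = to_nat (i # p)"
proof -
  assume n: "n \<in> nodes PP" and k: "kind PP n = Inner r cs" and i: "i < length cs"
  obtain p s where ps: "n = to_nat p" "sub T p = Some s" using node_cases n by blast
  show ?thesis
  proof (cases s)
    case (TN c r0 ts)
    then have "cs = map (\<lambda>i. to_nat (i # p)) [0..<length ts]" using k kind_TN ps by auto
    then show ?thesis using i ps by auto
  next
    case (TB c q b) then show ?thesis using k kind_TB ps by auto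
  qed
qed

lemma PPf: "\<forall>n\<in>nodes PP. \<forall>r cs i. kind PP n = Inner r cs \<longrightarrow> i < length cs \<longrightarrow> cs ! i \<noteq> root PP"
  using child_nat unfolding PP_simps by fastforce

lemma PPg: "\<forall>n\<in>nodes PP. \<forall>m\<in>nodes PP. \<forall>r cs r' cs' i j.
        kind PP n = Inner r cs \<longrightarrow> kind PP m = Inner r' cs' \<longrightarrow> i < length cs \<longrightarrow> j < length cs'
        \<longrightarrow> cs ! i = cs' ! j \<longrightarrow> n = m \<and> i = j"
proof (intro ballI allI impI)
  fix n m r cs r' cs' i j
  assume n: "n \<in> nodes PP" and m: "m \<in> nodes PP" and k: "kind PP n = Inner r cs" and k': "kind PP m = Inner r' cs'"
    and i: "i < length cs" and j: "j < length cs'" and eq: "cs ! i = cs' ! j"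
  obtain p where c1: "n = to_nat p" "cs ! i = to_nat (i # p)" using child_nat[OF n k i] by blast
  obtain p' where c2: "m = to_nat p'" "cs' ! j = to_nat (j # p')" using child_nat[OF m k' j] by blast
  have "i # p = j # p'" using eq c1 c2 by (metis to_nat_split)
  then show "n = m \<and> i = j" using c1 c2 by simp
qed

lemma PPh: "\<forall>n\<in>nodes PP. \<forall>r cs. kind PP n = Inner r cs \<longrightarrow> rinst r (map (lab PP) cs) (lab PP n)"
proof (intro ballI allI impI)
  fix n r cs assume n: "n \<in> nodes PP" and k: "kind PP n = Inner r cs"
  then obtain p s where ps: "n = to_nat p" "sub T p = Some s" using node_cases by blast
  show "rinst r (map (lab PP) cs) (lab PP n)"
  proof (cases s)
    case (TN c r0 ts)
    then have cs: "cs = map (\<lambda>i. to_nat (i # p)) [0..<length ts]" "r0 = r" using k kind_TN ps by auto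
    have "map (lab PP) cs = map (nd \<circ> cfgt) ts"
    proof (rule nth_equalityI)
      show "length (map (lab PP) cs) = length (map (nd \<circ> cfgt) ts)" using cs by simp
    next
      fix i assume "i < length (map (lab PP) cs)"
      then have i: "i < length ts" using cs by simp
      have "sub T (i # p) = Some (ts ! i)" using ps TN i by simp
      then show "map (lab PP) cs ! i = map (nd \<circ> cfgt) ts ! i" using cs i lab_sub by simp
    qed
    then show ?thesis using local_TN[of p c r ts] ps TN cs lab_sub[OF ps(2)] by auto
  next
    case (TB c q b) then show ?thesis using k kind_TB ps by auto
  qed
qed

lemma PPi: "\<forall>n\<in>nodes PP. \<forall>c. kind PP n = Bud c \<longrightarrow>
        c \<in> nodes PP \<and> lab PP c = lab PP n \<and> (\<exists>r cs. kind PP c = Inner r cs \<and> cs \<noteq> [])"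
proof (intro ballI allI impI)
  fix n c assume n: "n \<in> nodes PP" and k: "kind PP n = Bud c"
  then obtain p s where ps: "n = to_nat p" "sub T p = Some s" using node_cases by blast
  show "c \<in> nodes PP \<and> lab PP c = lab PP n \<and> (\<exists>r cs. kind PP c = Inner r cs \<and> cs \<noteq> [])"
  proof (cases s)
    case (TN c0 r ts) then show ?thesis using k kind_TN ps by auto
  next
    case (TB c0 q b)
    then have cq: "c = to_nat q" using k kind_TB ps by auto
    obtain r ts where q: "sub T q = Some (TN c0 r ts)" "ts \<noteq> []" using local_TB[of p c0 q b] ps TB by blast
    have "c \<in> nodes PP" using cq q unfolding PP_simps poss_def by auto
    moreover have "lab PP c = lab PP n" using lab_sub[OF q(1)] lab_sub[OF ps(2)] cq ps TB by simp
    moreover have "kind PP c = Inner r (map (\<lambda>i. to_nat (i # q)) [0..<length ts])" using kind_TN[OF q(1)] cq by simp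
    ultimately show ?thesis using q(2) by auto
  qed
qed

lemma PP_preproof: "is_preproof PP"
  unfolding is_preproof_def by (intro conjI PPa PPb PPc PPd PPe PPf PPg PPh PPi)

lemma PP_cutfree: "cut_free PP"
  unfolding cut_free_def
proof (intro ballI allI)
  fix n f cs assume "n \<in> nodes PP"
  then obtain p s where ps: "n = to_nat p" "sub T p = Some s" using node_cases by blast
  show "kind PP n \<noteq> Inner (RCut f) cs"
  proof (cases s)
    case (TN c r ts) then show ?thesis using local_TN[of p c r ts] kind_TN ps by auto
  next
    case (TB c q b) then show ?thesis using kind_TB ps by auto
  qed
qed

lemma PP_root: "lab PP (root PP) = nd c0"
  using lab_sub[of "[]" T] DT_cfgt[OF DT0] unfolding PP_simps by simp

end


lemma stable_aux:
  fixes L :: "nat \<Rightarrow> nat"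
  assumes mono: "\<forall>j\<ge>J. L j \<le> L (Suc j)"
  shows "j \<ge> J \<Longrightarrow> j \<le> j' \<Longrightarrow> L j \<le> L j'"
proof -
  assume jJ: "j \<ge> J" and jj: "j \<le> j'"
  show "L j \<le> L j'" using jj
  proof (induction j' rule: dec_induct)
    case base then show ?case by simp
  next
    case (step n)
    then show ?case using mono jJ by (meson le_trans)
  qed
qed

lemma stable:
  fixes L :: "nat \<Rightarrow> nat"
  assumes mono: "\<forall>j\<ge>J. L j \<le> L (Suc j)" and bnd: "\<forall>j. L j \<le> (B::nat)"
  shows "\<exists>T\<ge>J. \<forall>j\<ge>T. L (Suc j) = L j"
proof (rule ccontr)
  assume "\<not> ?thesis"
  then have nc: "\<forall>T\<ge>J. \<exists>j\<ge>T. L (Suc j) \<noteq> L j" by blast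
  have "\<exists>j\<ge>J. L j \<ge> L J + n" for n
  proof (induction n)
    case 0 then show ?case by auto
  next
    case (Suc n)
    then obtain j where j: "j \<ge> J" "L j \<ge> L J + n" by blast
    obtain j' where j': "j' \<ge> j" "L (Suc j') \<noteq> L j'" using nc j(1) by blast
    have "L j \<le> L j'" using stable_aux[OF mono j(1) j'(1)] .
    moreover have "L j' \<le> L (Suc j')" using mono j j' by simp
    ultimately have "L (Suc j') \<ge> L J + Suc n" using j'(2) j(2) by linarith
    then show ?case using j j' by (meson le_SucI order_trans)
  qed
  from this[of "Suc B"] show False using bnd by (meson add_leE not_less_eq_eq)
qed

lemma inf_prog:
  assumes st: "\<forall>j\<ge>k. tstep (r j) (i j) (t j) (t (Suc j)) \<and> i j < 2"
    and ch: "\<forall>m. \<exists>j\<ge>m. t (Suc j) \<noteq> t j"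
  shows "\<forall>m. \<exists>j\<ge>max k m. progress (r j) (i j) (t j) (t (Suc j))"
proof (rule ccontr)
  assume "\<not> ?thesis"
  then obtain m where np: "\<forall>j\<ge>max k m. \<not> progress (r j) (i j) (t j) (t (Suc j))" by blast
  define m0 where "m0 = max k m"
  have step: "\<forall>j\<ge>m0. msz (t (Suc j)) \<le> msz (t j) \<and> (t (Suc j) \<noteq> t j \<longrightarrow> msz (t (Suc j)) < msz (t j))"
  proof (intro allI impI)
    fix j assume j: "j \<ge> m0"
    then have "tstep (r j) (i j) (t j) (t (Suc j))" "i j < 2" "\<not> progress (r j) (i j) (t j) (t (Suc j))"
      using st np unfolding m0_def by auto
    then show "msz (t (Suc j)) \<le> msz (t j) \<and> (t (Suc j) \<noteq> t j \<longrightarrow> msz (t (Suc j)) < msz (t j))"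
      using tstep_dec by (cases "t (Suc j) = t j") fastforce+
  qed
  have mono: "\<forall>j\<ge>m0. (\<lambda>j. msz (t j)) (Suc j) \<le> (\<lambda>j. msz (t j)) j" using step by auto
  have decr: "\<forall>j\<ge>m0. \<exists>j'>j. msz (t j') < msz (t j)"
  proof (intro allI impI)
    fix j assume j: "j \<ge> m0"
    obtain j1 where j1: "j1 \<ge> j" "t (Suc j1) \<noteq> t j1" using ch by blast
    have "msz (t j1) \<le> msz (t j)"
    proof -
      have "\<forall>n. msz (t (j + n)) \<le> msz (t j)"
      proof
        fix n show "msz (t (j + n)) \<le> msz (t j)"
        proof (induction n)
          case (Suc n)
          have "msz (t (Suc (j + n))) \<le> msz (t (j + n))" using step j by auto
          then show ?case using Suc by simp
        qed simp
      qed
      then show ?thesis using j1(1) by (metis le_add_diff_inverse)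
    qed
    moreover have "msz (t (Suc j1)) < msz (t j1)" using step j j1 by auto
    ultimately show "\<exists>j'>j. msz (t j') < msz (t j)" using j1(1) by (intro exI[of _ "Suc j1"]) auto
  qed
  define v where "v = (LEAST v. \<exists>j\<ge>m0. msz (t j) = v)"
  have "\<exists>j\<ge>m0. msz (t j) = v" unfolding v_def by (rule LeastI[of _ "msz (t m0)"]) auto
  then obtain j where j: "j \<ge> m0" "msz (t j) = v" by blast
  obtain j' where "j' > j" "msz (t j') < msz (t j)" using decr j(1) by blast
  moreover have "v \<le> msz (t j')" unfolding v_def using \<open>j' > j\<close> j(1) by (intro Least_le exI[of _ j']) auto
  ultimately show False using j(2) by simp
qed

fun br :: "(nat list \<Rightarrow> nat \<Rightarrow> bool) \<Rightarrow> nat list \<Rightarrow> nat list" where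
  "br e [] = []"
| "br e (i # p) = (if e p i then br e p else i # p)"

lemma br_suffix: "\<exists>xs. p = xs @ br e p"
  by (induction p) (auto intro: exI[of _ "_ # _"])

lemma br_len: "length (br e p) \<le> length p"
  using br_suffix[of p e] by (metis le_add2 length_append)

lemma br_path: "pathok e q p \<Longrightarrow> br e p = br e q"
  by (induction rule: pathok.induct) auto

lemma pathok_mono: "pathok e q p \<Longrightarrow> (\<And>p i. e p i \<Longrightarrow> e' p i) \<Longrightarrow> pathok e' q p"
  by (induction rule: pathok.induct) (auto intro: pathok.intros)

lemma pathok_last: "pathok e q (i # p) \<Longrightarrow> q \<noteq> i # p \<Longrightarrow> e p i \<and> pathok e q p"
  by (erule pathok.cases) auto

fun tcs :: "('p,'a) tr \<Rightarrow> ('p,'a) tr list" where "tcs (TN c r ts) = ts" | "tcs (TB c q b) = []"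
fun trl :: "('p,'a) tr \<Rightarrow> ('p,'a) rule" where "trl (TN c r ts) = r" | "trl (TB c q b) = RAx"

context snd_loc
begin

lemma e2_e1: "e2 T p i \<Longrightarrow> e1 T p i" unfolding e1_def e2_def by blast

definition maxlen where "maxlen = Max (length ` poss T)"

lemma len_bound: "sub T p \<noteq> None \<Longrightarrow> length p \<le> maxlen"
  unfolding maxlen_def using finite_poss[of T] by (auto simp: poss_def intro!: Max_ge)

lemma path_step:
  assumes ip: "inf_path PP f g"
  shows "\<exists>c r ts. sub T (from_nat (f j)) = Some (TN c r ts) \<and> g j < length ts \<and> rule_of PP (f j) = r
    \<and> f j = to_nat (from_nat (f j) :: nat list) \<and>
    (case ts ! g j of TN c' r' ts' \<Rightarrow> from_nat (f (Suc j)) = g j # (from_nat (f j) :: nat list)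
                    | TB c' q b \<Rightarrow> from_nat (f (Suc j)) = q)"
proof -
  obtain r0 cs where fj: "f j \<in> nodes PP" "kind PP (f j) = Inner r0 cs" "g j < length cs"
    "f (Suc j) = resolve PP (cs ! g j)"
    using ip unfolding inf_path_def by blast
  obtain p s where ps: "f j = to_nat p" "sub T p = Some s" using node_cases[OF fj(1)] by blast
  obtain c ts where s: "s = TN c r0 ts" "cs = map (\<lambda>i. to_nat (i # p)) [0..<length ts]"
    using fj(2) ps by (cases s) (auto simp: kind_TN kind_TB)
  have gl: "g j < length ts" using fj(3) s by simp
  have csg: "cs ! g j = to_nat (g j # p)" using s gl by simp
  have sg: "sub T (g j # p) = Some (ts ! g j)" using ps s gl by simp
  have ro: "rule_of PP (f j) = r0" using fj(2) unfolding rule_of_def by simp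
  have "case ts ! g j of TN c' r' ts' \<Rightarrow> from_nat (f (Suc j)) = g j # p | TB c' q b \<Rightarrow> from_nat (f (Suc j)) = q"
  proof (cases "ts ! g j")
    case (TN c' r' ts')
    then have "resolve PP (cs ! g j) = to_nat (g j # p)" using kind_TN[OF sg[unfolded TN]] csg
      unfolding resolve_def by simp
    then show ?thesis using fj(4) TN by simp
  next
    case (TB c' q b)
    then have "resolve PP (cs ! g j) = to_nat q" using kind_TB[OF sg[unfolded TB]] csg
      unfolding resolve_def by simp
    then show ?thesis using fj(4) TB by simp
  qed
  moreover have fp: "from_nat (f j) = p" using ps by simp
  ultimately show ?thesis using ps s gl ro by (intro exI[of _ c] exI[of _ r0] exI[of _ ts]) (cases "ts ! g j"; simp)
qed

end


context snd_loc
begin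

lemma local_TN_len: "sub T p = Some (TN c r ts) \<Longrightarrow> length ts \<le> 2"
  using local_TN[of p c r ts] step_basic[of c r] unfolding wfc_def by fastforce

lemma rec1_next:
  assumes s: "sub T q = Some (TN c r ts)" and r1: "rec1 c" and i: "i < length ts"
    and ok: "ok1 c r i (cfgt (ts!i))"
  shows "cf1 (cfgt (ts!i)) \<noteq> cf1 c"
proof -
  have L: "wfc C c" "(move c = MAx r \<and> ts = []) \<or>
       (\<exists>cs. move c = MStep r cs \<and> length ts = length cs \<and> (\<forall>i<length ts. cfgt (ts!i) = cs!i)) \<or>
       (\<exists>a Y t. phase c = 4 \<and> Box (At a) Y \<in> snd (nd c) \<and> r = RK (At a) Y \<and> ts = [t] \<and> cfgt t = kchild c a Y)"
    using local_TN[OF s] by blast+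
  then consider "move c = MAx r" "ts = []"
    | cs where "move c = MStep r cs" "length ts = length cs" "\<forall>i<length ts. cfgt (ts!i) = cs!i"
    | a Y t where "phase c = 4" "r = RK (At a) Y" "ts = [t]" "cfgt t = kchild c a Y" by blast
  then show ?thesis
  proof cases
    case 1 then show ?thesis using i by simp
  next
    case 2 then show ?thesis using rec1_change[OF r1 2(1)] i by auto
  next
    case 3 then show ?thesis using rec1_kchild[OF r1] ok i by auto
  qed
qed

lemma rec2_next:
  assumes s: "sub T q = Some (TN c r ts)" and r2: "rec2 c" and i: "i < length ts"
    and ok: "ok2 c r i (cfgt (ts!i))"
  shows "cf2 (cfgt (ts!i)) \<noteq> cf2 c"
proof -
  have L: "(move c = MAx r \<and> ts = []) \<or>
       (\<exists>cs. move c = MStep r cs \<and> length ts = length cs \<and> (\<forall>i<length ts. cfgt (ts!i) = cs!i)) \<or>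
       (\<exists>a Y t. phase c = 4 \<and> Box (At a) Y \<in> snd (nd c) \<and> r = RK (At a) Y \<and> ts = [t] \<and> cfgt t = kchild c a Y)"
    using local_TN[OF s] by blast
  then consider "move c = MAx r" "ts = []"
    | cs where "move c = MStep r cs" "length ts = length cs" "\<forall>i<length ts. cfgt (ts!i) = cs!i"
    | "phase c = 4" by blast
  then show ?thesis
  proof cases
    case 1 then show ?thesis using i by simp
  next
    case 2 then show ?thesis using rec2_change[OF r2 2(1)] i ok by auto
  next
    case 3 then show ?thesis using r2 by (simp add: rec2_def)
  qed
qed

lemma good_paths:
  assumes ip: "inf_path PP f g"
  shows "\<exists>k t. good_trace PP f g k t"
proof -
  define \<pi> where "\<pi> j = (from_nat (f j) :: nat list)" for j
  define tn where "tn j = the (sub T (\<pi> j))" for j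
  define \<kappa> where "\<kappa> j = cfgt (tn j)" for j
  define \<rho> where "\<rho> j = trl (tn j)" for j
  define tss where "tss j = tcs (tn j)" for j
  have S: "sub T (\<pi> j) = Some (TN (\<kappa> j) (\<rho> j) (tss j)) \<and> g j < length (tss j) \<and> rule_of PP (f j) = \<rho> j
     \<and> f j = to_nat (\<pi> j) \<and>
     (case tss j ! g j of TN c' r' ts' \<Rightarrow> \<pi> (Suc j) = g j # \<pi> j | TB c' q b \<Rightarrow> \<pi> (Suc j) = q)" for j
  proof -
    obtain c r ts where P: "sub T (\<pi> j) = Some (TN c r ts)" "g j < length ts" "rule_of PP (f j) = r"
      "f j = to_nat (\<pi> j)"
      "case ts ! g j of TN c' r' ts' \<Rightarrow> \<pi> (Suc j) = g j # \<pi> j | TB c' q b \<Rightarrow> \<pi> (Suc j) = q"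
      using path_step[OF ip, of j] unfolding \<pi>_def by blast
    then show ?thesis unfolding \<kappa>_def \<rho>_def tss_def tn_def by simp
  qed
  have lab: "lab PP (f j) = nd (\<kappa> j)" for j using S[of j] lab_sub[of "\<pi> j"] by auto
  have wf: "wfc C (\<kappa> j)" for j using inv[of "\<pi> j"] S[of j] by fastforce
  have len2: "g j < 2" for j using S[of j] local_TN_len[of "\<pi> j"] by fastforce
  have subc: "sub T (g j # \<pi> j) = Some (tss j ! g j)" for j using S[of j] by simp
  have C1: "\<kappa> (Suc j) = cfgt (tss j ! g j)" for j
  proof (cases "tss j ! g j")
    case (TN c' r' ts')
    then have "\<pi> (Suc j) = g j # \<pi> j" using S[of j] by simp
    then show ?thesis using subc[of j] unfolding \<kappa>_def tn_def by simp
  next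
    case (TB c' q b)
    then have pq: "\<pi> (Suc j) = q" using S[of j] by simp
    have "sub T (g j # \<pi> j) = Some (TB c' q b)" using subc[of j] TB by simp
    from local_TB[OF this] obtain r ts where "sub T q = Some (TN c' r ts)" by blast
    then show ?thesis using pq TB unfolding \<kappa>_def tn_def by simp
  qed
  have E1: "e1 T (\<pi> j) (g j) \<longleftrightarrow> ok1 (\<kappa> j) (\<rho> j) (g j) (\<kappa> (Suc j))" for j
    using S[of j] C1[of j] unfolding e1_def by auto
  have E2: "e2 T (\<pi> j) (g j) \<longleftrightarrow> ok1 (\<kappa> j) (\<rho> j) (g j) (\<kappa> (Suc j)) \<and> ok2 (\<kappa> j) (\<rho> j) (g j) (\<kappa> (Suc j))" for j
    using S[of j] C1[of j] unfolding e2_def by auto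
  have Bud: "tss j ! g j = TB c q b \<Longrightarrow> \<pi> (Suc j) = q \<and> q \<noteq> g j # \<pi> j \<and>
      (b \<longrightarrow> pathok (e1 T) q (g j # \<pi> j) \<and> rec1 c) \<and> (\<not> b \<longrightarrow> pathok (e2 T) q (g j # \<pi> j) \<and> rec2 c)
      \<and> \<kappa> (Suc j) = c" for j c q b
    using S[of j] local_TB[of "g j # \<pi> j" c q b] subc[of j] C1[of j] by auto
  have bound: "length (\<pi> j) \<le> maxlen" for j using S[of j] len_bound by auto
  define L1 where "L1 j = length (br (e1 T) (\<pi> j))" for j
  have L1step: "L1 j \<le> L1 (Suc j) \<and> (\<not> e1 T (\<pi> j) (g j) \<longrightarrow> L1 j < L1 (Suc j))" for j
  proof (cases "tss j ! g j")
    case (TN c' r' ts')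
    then have "\<pi> (Suc j) = g j # \<pi> j" using S[of j] by simp
    then show ?thesis unfolding L1_def using br_len[of "e1 T" "\<pi> j"] by auto
  next
    case (TB c q b)
    have B: "\<pi> (Suc j) = q" "q \<noteq> g j # \<pi> j" "pathok (e1 T) q (g j # \<pi> j)"
      using Bud[OF TB] pathok_mono[of "e2 T" q "g j # \<pi> j" "e1 T"] e2_e1 by (cases b; auto)+
    have "e1 T (\<pi> j) (g j)" using pathok_last[OF B(3) B(2)] by blast
    moreover have "br (e1 T) (g j # \<pi> j) = br (e1 T) q" by (rule br_path[OF B(3)])
    ultimately show ?thesis unfolding L1_def using B(1) by simp
  qed
  obtain T1 where T1: "\<forall>j\<ge>T1. L1 (Suc j) = L1 j"
    using stable[of 0 L1 maxlen] L1step br_len bound unfolding L1_def by (meson le_trans)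
  have ok1T: "\<forall>j\<ge>T1. ok1 (\<kappa> j) (\<rho> j) (g j) (\<kappa> (Suc j))"
    using T1 L1step E1 by (metis less_irrefl)
  show ?thesis
  proof (cases "\<forall>m. \<exists>j\<ge>m. cf1 (\<kappa> (Suc j)) \<noteq> cf1 (\<kappa> j)")
    case True
    obtain j0 where j0: "j0 \<ge> T1" "cf1 (\<kappa> (Suc j0)) \<noteq> cf1 (\<kappa> j0)" using True by blast
    have "\<exists>\<tau>. cf1 (\<kappa> j0) = Some \<tau>" using ok1T j0 unfolding ok1_def by auto
    have SomeA: "\<forall>j\<ge>j0. \<exists>\<tau>. cf1 (\<kappa> j) = Some \<tau>"
    proof (intro allI impI)
      fix j assume "j \<ge> j0"
      then show "\<exists>\<tau>. cf1 (\<kappa> j) = Some \<tau>"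
      proof (induction j rule: dec_induct)
        case base then show ?case using \<open>\<exists>\<tau>. cf1 (\<kappa> j0) = Some \<tau>\<close> .
      next
        case (step n)
        have "ok1 (\<kappa> n) (\<rho> n) (g n) (\<kappa> (Suc n))" using ok1T step(1) j0(1) by auto
        then show ?case using step(3) unfolding ok1_def by auto
      qed
    qed
    define t where "t j = the (cf1 (\<kappa> j))" for j
    have tS: "\<forall>j\<ge>j0. cf1 (\<kappa> j) = Some (t j)" using SomeA unfolding t_def by auto
    have st: "\<forall>j\<ge>j0. tstep (rule_of PP (f j)) (g j) (t j) (t (Suc j)) \<and> g j < 2"
    proof (intro allI impI conjI)
      fix j assume j: "j \<ge> j0"
      have "ok1 (\<kappa> j) (\<rho> j) (g j) (\<kappa> (Suc j))" using ok1T j j0 by auto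
      then show "tstep (rule_of PP (f j)) (g j) (t j) (t (Suc j))"
        using tS j S[of j] unfolding ok1_def by auto
      show "g j < 2" by (rule len2)
    qed
    have chg: "\<forall>m. \<exists>j\<ge>m. t (Suc j) \<noteq> t j"
    proof
      fix m obtain j where "j \<ge> max m j0" "cf1 (\<kappa> (Suc j)) \<noteq> cf1 (\<kappa> j)" using True by blast
      then show "\<exists>j\<ge>m. t (Suc j) \<noteq> t j" using tS by (metis le_SucI max.boundedE)
    qed
    have "good_trace PP f g j0 t"
      unfolding good_trace_def
    proof (intro conjI allI impI)
      fix j assume j: "j \<ge> j0"
      show "t j \<in> snd (lab PP (f j))" using wf[of j] tS j lab[of j] unfolding wfc_def by auto
      show "tstep (rule_of PP (f j)) (g j) (t j) (t (Suc j))" using st j by auto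
    next
      fix m show "\<exists>j\<ge>max j0 m. progress (rule_of PP (f j)) (g j) (t j) (t (Suc j))"
        using inf_prog[OF st chg] by blast
    qed
    then show ?thesis by blast
  next
    case False
    then obtain T0 where T0: "\<forall>j\<ge>T0. cf1 (\<kappa> (Suc j)) = cf1 (\<kappa> j)" by blast
    define T' where "T' = max T0 T1"
    have NB1: "\<forall>j\<ge>T'. \<forall>c q. tss j ! g j \<noteq> TB c q True"
    proof (intro allI impI notI)
      fix j c q assume j: "j \<ge> T'" and tb: "tss j ! g j = TB c q True"
      have B: "\<pi> (Suc j) = q" "rec1 c" "\<kappa> (Suc j) = c" using Bud[OF tb] by auto
      have sq: "sub T q = Some (TN c (\<rho> (Suc j)) (tss (Suc j)))" using S[of "Suc j"] B by simp
      have ok0: "ok1 (\<kappa> (Suc j)) (\<rho> (Suc j)) (g (Suc j)) (\<kappa> (Suc (Suc j)))" using ok1T j unfolding T'_def by simp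
      have ok: "ok1 c (\<rho> (Suc j)) (g (Suc j)) (cfgt (tss (Suc j) ! g (Suc j)))"
        using ok0 unfolding C1[of "Suc j"] B(3) .
      have "cf1 (\<kappa> (Suc (Suc j))) \<noteq> cf1 (\<kappa> (Suc j))"
        using rec1_next[OF sq B(2) _ ok] S[of "Suc j"] C1[of "Suc j"] B(3) by auto
      then show False using T0 j unfolding T'_def by auto
    qed
    define L2 where "L2 j = length (br (e2 T) (\<pi> j))" for j
    have L2step: "j \<ge> T' \<Longrightarrow> L2 j \<le> L2 (Suc j) \<and> (\<not> e2 T (\<pi> j) (g j) \<longrightarrow> L2 j < L2 (Suc j))" for j
    proof (cases "tss j ! g j")
      case (TN c' r' ts')
      then have "\<pi> (Suc j) = g j # \<pi> j" using S[of j] by simp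
      then show ?thesis unfolding L2_def using br_len[of "e2 T" "\<pi> j"] by auto
    next
      case (TB c q b)
      assume j: "j \<ge> T'"
      have nb: "b = False"
      proof (rule ccontr)
        assume "b \<noteq> False" then have "tss j ! g j = TB c q True" using TB by simp
        then show False using NB1 j by blast
      qed
      have B: "\<pi> (Suc j) = q" "q \<noteq> g j # \<pi> j" "pathok (e2 T) q (g j # \<pi> j)"
        using Bud[OF TB] nb by auto
      have "e2 T (\<pi> j) (g j)" using pathok_last[OF B(3) B(2)] by blast
      moreover have "br (e2 T) (g j # \<pi> j) = br (e2 T) q" by (rule br_path[OF B(3)])
      ultimately show ?thesis unfolding L2_def using B(1) by simp
    qed
    obtain T2 where T2: "T2 \<ge> T'" "\<forall>j\<ge>T2. L2 (Suc j) = L2 j"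
      using stable[of T' L2 maxlen] L2step br_len bound unfolding L2_def by (meson le_trans)
    have ok2T: "\<forall>j\<ge>T2. ok1 (\<kappa> j) (\<rho> j) (g j) (\<kappa> (Suc j)) \<and> ok2 (\<kappa> j) (\<rho> j) (g j) (\<kappa> (Suc j))"
      using T2 L2step E2 by (metis less_irrefl order_trans)
    have jumps: "\<forall>m. \<exists>j\<ge>m. \<exists>c q b. tss j ! g j = TB c q b"
    proof (rule ccontr)
      assume "\<not> ?thesis"
      then obtain m where m: "\<forall>j\<ge>m. \<forall>c q b. tss j ! g j \<noteq> TB c q b" by blast
      have "length (\<pi> (m + n)) = length (\<pi> m) + n" for n
      proof (induction n)
        case (Suc n)
        have "\<pi> (Suc (m + n)) = g (m + n) # \<pi> (m + n)"
          using S[of "m + n"] m by (cases "tss (m + n) ! g (m + n)") auto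
        then show ?case using Suc by simp
      qed simp
      from this[of "Suc maxlen"] bound[of "m + Suc maxlen"] show False by simp
    qed
    have chg2: "\<forall>m. \<exists>j\<ge>m. cf2 (\<kappa> (Suc j)) \<noteq> cf2 (\<kappa> j)"
    proof
      fix m
      obtain j c q b where j: "j \<ge> max m T2" "tss j ! g j = TB c q b" using jumps by blast
      have nb: "b = False"
      proof (rule ccontr)
        assume "b \<noteq> False" then have "tss j ! g j = TB c q True" using j(2) by simp
        moreover have "j \<ge> T'" using j(1) T2(1) by simp
        ultimately show False using NB1 by blast
      qed
      have B: "\<pi> (Suc j) = q" "rec2 c" "\<kappa> (Suc j) = c" using Bud[OF j(2)] nb by auto
      have sq: "sub T q = Some (TN c (\<rho> (Suc j)) (tss (Suc j)))" using S[of "Suc j"] B by simp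
      have ok0: "ok2 (\<kappa> (Suc j)) (\<rho> (Suc j)) (g (Suc j)) (\<kappa> (Suc (Suc j)))" using ok2T j by simp
      have ok: "ok2 c (\<rho> (Suc j)) (g (Suc j)) (cfgt (tss (Suc j) ! g (Suc j)))"
        using ok0 unfolding C1[of "Suc j"] B(3) .
      have "cf2 (\<kappa> (Suc (Suc j))) \<noteq> cf2 (\<kappa> (Suc j))"
        using rec2_next[OF sq B(2) _ ok] S[of "Suc j"] C1[of "Suc j"] B(3) by auto
      then show "\<exists>j\<ge>m. cf2 (\<kappa> (Suc j)) \<noteq> cf2 (\<kappa> j)" using j(1) by (intro exI[of _ "Suc j"]) auto
    qed
    obtain j0 where j0: "j0 \<ge> T2" "cf2 (\<kappa> (Suc j0)) \<noteq> cf2 (\<kappa> j0)" using chg2 by blast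
    have "\<exists>\<tau>. cf2 (\<kappa> j0) = Some \<tau>" using ok2T j0 unfolding ok2_def by auto
    have SomeB: "\<forall>j\<ge>j0. \<exists>\<tau>. cf2 (\<kappa> j) = Some \<tau>"
    proof (intro allI impI)
      fix j assume "j \<ge> j0"
      then show "\<exists>\<tau>. cf2 (\<kappa> j) = Some \<tau>"
      proof (induction j rule: dec_induct)
        case base then show ?case using \<open>\<exists>\<tau>. cf2 (\<kappa> j0) = Some \<tau>\<close> .
      next
        case (step n)
        have "ok2 (\<kappa> n) (\<rho> n) (g n) (\<kappa> (Suc n))" using ok2T step(1) j0(1) by auto
        then show ?case using step(3) unfolding ok2_def by auto
      qed
    qed
    define t where "t j = the (cf2 (\<kappa> j))" for j
    have tS: "\<forall>j\<ge>j0. cf2 (\<kappa> j) = Some (t j)" using SomeB unfolding t_def by auto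
    have st: "\<forall>j\<ge>j0. tstep (rule_of PP (f j)) (g j) (t j) (t (Suc j)) \<and> g j < 2"
    proof (intro allI impI conjI)
      fix j assume j: "j \<ge> j0"
      have "ok2 (\<kappa> j) (\<rho> j) (g j) (\<kappa> (Suc j))" using ok2T j j0 by auto
      then show "tstep (rule_of PP (f j)) (g j) (t j) (t (Suc j))"
        using tS j S[of j] unfolding ok2_def by auto
      show "g j < 2" by (rule len2)
    qed
    have chg: "\<forall>m. \<exists>j\<ge>m. t (Suc j) \<noteq> t j"
    proof
      fix m obtain j where "j \<ge> max m j0" "cf2 (\<kappa> (Suc j)) \<noteq> cf2 (\<kappa> j)" using chg2 by blast
      then show "\<exists>j\<ge>m. t (Suc j) \<noteq> t j" using tS by (metis le_SucI max.boundedE)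
    qed
    have "good_trace PP f g j0 t"
      unfolding good_trace_def
    proof (intro conjI allI impI)
      fix j assume j: "j \<ge> j0"
      show "t j \<in> snd (lab PP (f j))" using wf[of j] tS j lab[of j] unfolding wfc_def by auto
      show "tstep (rule_of PP (f j)) (g j) (t j) (t (Suc j))" using st j by auto
    next
      fix m show "\<exists>j\<ge>max j0 m. progress (rule_of PP (f j)) (g j) (t j) (t (Suc j))"
        using inf_prog[OF st chg] by blast
    qed
    then show ?thesis by blast
  qed
qed

lemma PP_proof: "is_proof PP"
  unfolding is_proof_def using PP_preproof good_paths by blast

end


abbreviation (input) Dprov where "Dprov \<equiv> D"

theorem mainTheorem11:
  fixes G D :: "('p, 'a) fm set"
  assumes "finite G" and "finite D"
    and "valid G D"
  shows "cutfree_provable G D"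
proof -
  define C where "C = \<Union> (fl ` (G \<union> D))"
  have finC: "finite C" unfolding C_def using assms(1,2) fl_finite by blast
  have clC: "clos C" unfolding clos_def C_def using fl_closed by blast
  have GC: "G \<subseteq> C" "D \<subseteq> C" unfolding C_def using fl_self by blast+
  interpret cmpl C by unfold_locales (rule finC, rule clC)
  have Dr: "Dprov [] [] ((G, D), None, None)"
    using countermodel[OF _ GC] assms(3) by blast
  obtain T where T: "DT [] [] [] ((G, D), None, None) T"
    using D_DT[OF Dr] by fastforce
  have w0: "wfc C ((G, D), None, None)" using GC unfolding wfc_def by simp
  interpret snd_loc C "((G, D), None, None)" T by unfold_locales (rule finC, rule clC, rule w0, rule T)
  show ?thesis unfolding cutfree_provable_def using PP_proof PP_cutfree PP_root by auto
qed


end
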